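(* Let $\mathcal{H}$ be a Hilbert space and $T\in\mathcal{B}(\mathcal{H})$ a convex operator, i.e. $T^{*2}T^2-2T^*T+I\ge0$. The following are equivalent: (i) $T$ has a $2$-isometric lifting; (ii) $T$ has a $2$-isometric lifting $S\in\mathcal{B}(\mathcal{K})$ with $\mathcal{K}\ominus\mathcal{H}\subset\operatorname{Ker}(S^*S-I)$; (iii) $\sup_{n\ge0}\frac{\|T^n\|^2}{n+1}<\infty$.
   Context: If $\mathcal{H}$ is a closed subspace of a Hilbert space $\mathcal{K}$ with orthogonal projection $P_{\mathcal{H}}$, an operator $S\in\mathcal{B}(\mathcal{K})$ is a lifting of $T\in\mathcal{B}(\mathcal{H})$ if $TP_{\mathcal{H}}=P_{\mathcal{H}}S$ (up to unitary identification of $\mathcal{H}$ with a subspace of $\mathcal{K}$). $S$ is a $2$-isometry if $S^{*2}S^2-2S^*S+I=0$. *)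

theory Defs
  imports "HOL-Analysis.Analysis"
begin

text \<open>A complex Hilbert space is modelled as a real Hilbert space (real inner product, complete)
  together with the multiplication by the imaginary unit, an orthogonal real-linear map
  squaring to minus the identity.\<close>

class chilbert = real_inner + complete_space +
  fixes imult :: "'a \<Rightarrow> 'a"
  assumes imult_add: "imult (x + y) = imult x + imult y"
    and imult_scaleR: "imult (r *\<^sub>R x) = r *\<^sub>R imult x"
    and imult_imult: "imult (imult x) = - x"
    and inner_imult_imult: "inner (imult x) (imult y) = inner x y"

text \<open>Complex scalar multiplication and the complex inner product
  (linear in the first, conjugate-linear in the second argument).\<close>

definition scaleC :: "complex \<Rightarrow> 'a::chilbert \<Rightarrow> 'a" where
  "scaleC c x = Re c *\<^sub>R x + Im c *\<^sub>R imult x"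

definition cinner :: "'a::chilbert \<Rightarrow> 'a \<Rightarrow> complex" where
  "cinner x y = Complex (inner x y) (inner x (imult y))"

section \<open>The Hilbert space l2(N; H)\<close>

typedef (overloaded) 'a l2 = "{f :: nat \<Rightarrow> 'a::real_inner. summable (\<lambda>n. (norm (f n))\<^sup>2)}"
  morphisms l2_fun Abs_l2
  by (rule exI[of _ "\<lambda>_. 0"]) simp

setup_lifting type_definition_l2

lemma l2_sq_add_bound:
  fixes a b :: "'a::real_normed_vector"
  shows "(norm (a + b))\<^sup>2 \<le> 2 * (norm a)\<^sup>2 + 2 * (norm b)\<^sup>2"
proof -
  have "(norm (a + b))\<^sup>2 \<le> (norm a + norm b)\<^sup>2"
    by (simp add: norm_triangle_ineq power_mono)
  also have "\<dots> \<le> 2 * (norm a)\<^sup>2 + 2 * (norm b)\<^sup>2"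
  proof -
    have "0 \<le> (norm a - norm b)\<^sup>2" by simp
    then show ?thesis unfolding power2_sum power2_diff by linarith
  qed
  finally show ?thesis .
qed

lemma summable_l2_add:
  fixes f g :: "nat \<Rightarrow> 'a::real_normed_vector"
  assumes "summable (\<lambda>n. (norm (f n))\<^sup>2)" "summable (\<lambda>n. (norm (g n))\<^sup>2)"
  shows "summable (\<lambda>n. (norm (f n + g n))\<^sup>2)"
proof (rule summable_comparison_test[where g = "\<lambda>n. 2 * (norm (f n))\<^sup>2 + 2 * (norm (g n))\<^sup>2"])
  show "\<exists>N. \<forall>n\<ge>N. norm ((norm (f n + g n))\<^sup>2) \<le> 2 * (norm (f n))\<^sup>2 + 2 * (norm (g n))\<^sup>2"
    using l2_sq_add_bound by auto
  show "summable (\<lambda>n. 2 * (norm (f n))\<^sup>2 + 2 * (norm (g n))\<^sup>2)"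
    using assms by (intro summable_add summable_mult)
qed

lemma summable_l2_inner:
  fixes f g :: "nat \<Rightarrow> 'a::real_inner"
  assumes "summable (\<lambda>n. (norm (f n))\<^sup>2)" "summable (\<lambda>n. (norm (g n))\<^sup>2)"
  shows "summable (\<lambda>n. inner (f n) (g n))"
proof (rule summable_comparison_test[where g = "\<lambda>n. (norm (f n))\<^sup>2 + (norm (g n))\<^sup>2"])
  have "\<bar>inner a b\<bar> \<le> (norm a)\<^sup>2 + (norm b)\<^sup>2" for a b :: 'a
  proof -
    have "\<bar>inner a b\<bar> \<le> norm a * norm b" by (rule Cauchy_Schwarz_ineq2)
    also have "\<dots> \<le> (norm a)\<^sup>2 + (norm b)\<^sup>2"
    proof -
      have "0 \<le> (norm a - norm b)\<^sup>2" by simp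
      moreover have "0 \<le> norm a * norm b" by simp
      ultimately show ?thesis unfolding power2_diff by linarith
    qed
    finally show ?thesis .
  qed
  then show "\<exists>N. \<forall>n\<ge>N. norm (inner (f n) (g n)) \<le> (norm (f n))\<^sup>2 + (norm (g n))\<^sup>2"
    by auto
  show "summable (\<lambda>n. (norm (f n))\<^sup>2 + (norm (g n))\<^sup>2)"
    using assms by (intro summable_add)
qed

instantiation l2 :: (real_inner) real_vector
begin

lift_definition zero_l2 :: "'a l2" is "\<lambda>_. 0" by simp

lift_definition plus_l2 :: "'a l2 \<Rightarrow> 'a l2 \<Rightarrow> 'a l2" is "\<lambda>f g n. f n + g n"
  by (rule summable_l2_add)

lift_definition uminus_l2 :: "'a l2 \<Rightarrow> 'a l2" is "\<lambda>f n. - f n" by simp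

lift_definition minus_l2 :: "'a l2 \<Rightarrow> 'a l2 \<Rightarrow> 'a l2" is "\<lambda>f g n. f n - g n"
proof -
  fix f g :: "nat \<Rightarrow> 'a"
  assume "summable (\<lambda>n. (norm (f n))\<^sup>2)" "summable (\<lambda>n. (norm (g n))\<^sup>2)"
  then have "summable (\<lambda>n. (norm (f n + - g n))\<^sup>2)"
    by (intro summable_l2_add) simp_all
  then show "summable (\<lambda>n. (norm (f n - g n))\<^sup>2)" by simp
qed

lift_definition scaleR_l2 :: "real \<Rightarrow> 'a l2 \<Rightarrow> 'a l2" is "\<lambda>r f n. r *\<^sub>R f n"
proof -
  fix r :: real and f :: "nat \<Rightarrow> 'a"
  assume "summable (\<lambda>n. (norm (f n))\<^sup>2)"
  then have "summable (\<lambda>n. r\<^sup>2 * (norm (f n))\<^sup>2)" by (rule summable_mult)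
  then show "summable (\<lambda>n. (norm (r *\<^sub>R f n))\<^sup>2)"
    by (simp add: power_mult_distrib)
qed

instance
  by standard (transfer; auto simp: fun_eq_iff algebra_simps)+

end

lemma summable_l2_fun: "summable (\<lambda>n. (norm (l2_fun x n))\<^sup>2)"
  using l2_fun[of x] by simp

instantiation l2 :: (real_inner) real_inner
begin

lift_definition inner_l2 :: "'a l2 \<Rightarrow> 'a l2 \<Rightarrow> real" is "\<lambda>f g. \<Sum>n. inner (f n) (g n)" .

definition norm_l2 :: "'a l2 \<Rightarrow> real" where "norm_l2 x = sqrt (inner x x)"

definition sgn_l2 :: "'a l2 \<Rightarrow> 'a l2" where "sgn_l2 x = x /\<^sub>R norm x"

definition dist_l2 :: "'a l2 \<Rightarrow> 'a l2 \<Rightarrow> real" where "dist_l2 x y = norm (x - y)"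

definition uniformity_l2 :: "('a l2 \<times> 'a l2) filter" where
  "uniformity_l2 = (INF e\<in>{0 <..}. principal {(x, y). dist x y < e})"

definition open_l2 :: "'a l2 set \<Rightarrow> bool" where
  "open_l2 U \<longleftrightarrow> (\<forall>x\<in>U. eventually (\<lambda>(x', y). x' = x \<longrightarrow> y \<in> U) uniformity)"

instance
proof
  fix x y z :: "'a l2" and r :: real
  show "inner x y = inner y x"
    by transfer (simp add: inner_commute)
  show "inner (x + y) z = inner x z + inner y z"
    by transfer (simp add: inner_add_left suminf_add summable_l2_inner)
  show "inner (r *\<^sub>R x) y = r * inner x y"
    by transfer (simp add: suminf_mult summable_l2_inner)
  show "0 \<le> inner x x"
    by transfer (auto intro: suminf_nonneg summable_l2_inner)
  show "inner x x = 0 \<longleftrightarrow> x = 0"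
  proof transfer
    fix f :: "nat \<Rightarrow> 'a"
    assume f: "summable (\<lambda>n. (norm (f n))\<^sup>2)"
    then have "summable (\<lambda>n. inner (f n) (f n))" by (rule summable_l2_inner[OF _ f])
    then show "((\<Sum>n. inner (f n) (f n)) = 0) = (f = (\<lambda>_. 0))"
      by (subst suminf_eq_zero_iff) (auto simp: fun_eq_iff)
  qed
  show "norm x = sqrt (inner x x)" by (simp add: norm_l2_def)
  show "sgn x = x /\<^sub>R norm x" by (simp add: sgn_l2_def)
  show "dist x y = norm (x - y)" by (simp add: dist_l2_def)
  show "(uniformity :: ('a l2 \<times> 'a l2) filter) = (INF e\<in>{0 <..}. principal {(x, y). dist x y < e})"
    by (simp add: uniformity_l2_def)
  fix U :: "'a l2 set"
  show "open U \<longleftrightarrow> (\<forall>x\<in>U. eventually (\<lambda>(x', y). x' = x \<longrightarrow> y \<in> U) uniformity)"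
    by (simp add: open_l2_def)
qed

end

lemma l2_norm_sq: "(norm x)\<^sup>2 = (\<Sum>n. (norm (l2_fun x n))\<^sup>2)"
  for x :: "'a::real_inner l2"
proof -
  have "(norm x)\<^sup>2 = inner x x" by (simp add: power2_norm_eq_inner)
  also have "\<dots> = (\<Sum>n. inner (l2_fun x n) (l2_fun x n))" by (simp add: inner_l2.rep_eq)
  also have "\<dots> = (\<Sum>n. (norm (l2_fun x n))\<^sup>2)" by (simp add: power2_norm_eq_inner)
  finally show ?thesis .
qed

lemma l2_partial_le: "(\<Sum>n<N. (norm (l2_fun x n))\<^sup>2) \<le> (norm x)\<^sup>2"
  for x :: "'a::real_inner l2"
  unfolding l2_norm_sq by (rule sum_le_suminf) (auto intro: summable_l2_fun)

lemma l2_coord_le: "norm (l2_fun x n) \<le> norm x"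
  for x :: "'a::real_inner l2"
proof -
  have "(norm (l2_fun x n))\<^sup>2 \<le> (\<Sum>m<Suc n. (norm (l2_fun x m))\<^sup>2)"
    by (rule member_le_sum) auto
  also have "\<dots> \<le> (norm x)\<^sup>2" by (rule l2_partial_le)
  finally show ?thesis by (rule power2_le_imp_le) simp
qed

instance l2 :: ("{real_inner,complete_space}") complete_space
proof
  fix X :: "nat \<Rightarrow> 'a l2" assume X: "Cauchy X"
  have coord: "Cauchy (\<lambda>k. l2_fun (X k) n)" for n
  proof (rule CauchyI)
    fix e :: real assume "0 < e"
    from CauchyD[OF X this] obtain M where M: "\<forall>m\<ge>M. \<forall>n\<ge>M. norm (X m - X n) < e" by blast
    show "\<exists>M. \<forall>m\<ge>M. \<forall>k\<ge>M. norm (l2_fun (X m) n - l2_fun (X k) n) < e"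
    proof (intro exI allI impI)
      fix m k assume "M \<le> m" "M \<le> k"
      have "norm (l2_fun (X m) n - l2_fun (X k) n) \<le> norm (X m - X k)"
        using l2_coord_le[of "X m - X k" n] by (simp add: minus_l2.rep_eq)
      also have "\<dots> < e" using M \<open>M \<le> m\<close> \<open>M \<le> k\<close> by blast
      finally show "norm (l2_fun (X m) n - l2_fun (X k) n) < e" .
    qed
  qed
  define g where "g n = lim (\<lambda>k. l2_fun (X k) n)" for n
  have g: "(\<lambda>k. l2_fun (X k) n) \<longlonglongrightarrow> g n" for n
    using Cauchy_convergent[OF coord[of n]] unfolding g_def by (simp add: convergent_LIMSEQ_iff)
  have bound: "(\<Sum>n<N. (norm (l2_fun (X k) n - g n))\<^sup>2) \<le> e\<^sup>2"
    if M: "\<forall>m\<ge>M. \<forall>k\<ge>M. norm (X m - X k) < e" and k: "M \<le> k" for M N e k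
  proof -
    have lim: "(\<lambda>j. \<Sum>n<N. (norm (l2_fun (X k) n - l2_fun (X j) n))\<^sup>2)
        \<longlonglongrightarrow> (\<Sum>n<N. (norm (l2_fun (X k) n - g n))\<^sup>2)"
      by (intro tendsto_intros g)
    have "\<forall>j\<ge>M. (\<Sum>n<N. (norm (l2_fun (X k) n - l2_fun (X j) n))\<^sup>2) \<le> e\<^sup>2"
    proof (intro allI impI)
      fix j assume j: "M \<le> j"
      have "(\<Sum>n<N. (norm (l2_fun (X k) n - l2_fun (X j) n))\<^sup>2) \<le> (norm (X k - X j))\<^sup>2"
        using l2_partial_le[where N=N and x="X k - X j"] by (simp add: minus_l2.rep_eq)
      also have "\<dots> \<le> e\<^sup>2"
        using M k j by (intro power_mono) (auto intro: less_imp_le)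
      finally show "(\<Sum>n<N. (norm (l2_fun (X k) n - l2_fun (X j) n))\<^sup>2) \<le> e\<^sup>2" .
    qed
    then show ?thesis using lim by (intro LIMSEQ_le_const2) auto
  qed
  obtain M0 where M0: "\<forall>m\<ge>M0. \<forall>k\<ge>M0. norm (X m - X k) < 1"
    using CauchyD[OF X, of 1] by auto
  have sumd: "summable (\<lambda>n. (norm (l2_fun (X M0) n - g n))\<^sup>2)"
    by (rule summableI_nonneg_bounded[where x = 1]) (use bound[OF M0, of M0] in auto)
  have "summable (\<lambda>n. (norm (l2_fun (X M0) n + - (l2_fun (X M0) n - g n)))\<^sup>2)"
    by (rule summable_l2_add[OF summable_l2_fun]) (use sumd in \<open>simp add: norm_minus_commute\<close>)
  then have gl2: "summable (\<lambda>n. (norm (g n))\<^sup>2)" by simp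
  define G where "G = Abs_l2 g"
  have G: "l2_fun G = g" using gl2 by (simp add: G_def Abs_l2_inverse)
  have "X \<longlonglongrightarrow> G"
  proof (rule LIMSEQ_I)
    fix r :: real assume r: "0 < r"
    then have "0 < r / 2" by simp
    from CauchyD[OF X this] obtain M where M: "\<forall>m\<ge>M. \<forall>k\<ge>M. norm (X m - X k) < r / 2" by blast
    show "\<exists>no. \<forall>n\<ge>no. norm (X n - G) < r"
    proof (intro exI allI impI)
      fix k assume k: "M \<le> k"
      have "(norm (X k - G))\<^sup>2 = (\<Sum>n. (norm (l2_fun (X k) n - g n))\<^sup>2)"
        by (simp add: l2_norm_sq minus_l2.rep_eq G)
      also have "\<dots> \<le> (r / 2)\<^sup>2"
      proof (rule suminf_le_const)
        show "summable (\<lambda>n. (norm (l2_fun (X k) n - g n))\<^sup>2)"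
          using summable_l2_fun[of "X k - G"] by (simp add: minus_l2.rep_eq G)
        show "\<And>N. (\<Sum>n<N. (norm (l2_fun (X k) n - g n))\<^sup>2) \<le> (r / 2)\<^sup>2"
          using bound[OF M k] .
      qed
      finally have "norm (X k - G) \<le> r / 2" by (rule power2_le_imp_le) (use r in simp)
      then show "norm (X k - G) < r" using r by simp
    qed
  qed
  then show "convergent X" by (rule convergentI)
qed

lemma norm_imult [simp]: "norm (imult x) = norm x"
  by (simp add: norm_eq_sqrt_inner inner_imult_imult)

instantiation l2 :: (chilbert) chilbert
begin

lift_definition imult_l2 :: "'a l2 \<Rightarrow> 'a l2" is "\<lambda>f n. imult (f n)" by simp

instance
  by standard (transfer; simp add: fun_eq_iff imult_add imult_scaleR imult_imult inner_imult_imult)+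

end

definition bounded_clinear_op :: "('a::chilbert \<Rightarrow> 'b::chilbert) \<Rightarrow> bool" where
  "bounded_clinear_op T \<longleftrightarrow> bounded_linear T \<and> (\<forall>x. T (imult x) = imult (T x))"

text \<open>Hilbert space adjoint (for complex-linear operators the adjoint with respect to the
  real part of the complex inner product coincides with the complex adjoint).\<close>

definition adjoint :: "('a::chilbert \<Rightarrow> 'b::chilbert) \<Rightarrow> 'b \<Rightarrow> 'a" where
  "adjoint T = (THE S. \<forall>x y. inner (T x) y = inner x (S y))"

definition positive_op :: "('a::chilbert \<Rightarrow> 'a) \<Rightarrow> bool" where
  "positive_op A \<longleftrightarrow> (\<forall>x. Im (cinner (A x) x) = 0 \<and> 0 \<le> Re (cinner (A x) x))"

definition convex_op :: "('a::chilbert \<Rightarrow> 'a) \<Rightarrow> bool" where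
  "convex_op T \<longleftrightarrow>
     positive_op (\<lambda>x. adjoint T (adjoint T (T (T x))) - 2 *\<^sub>R adjoint T (T x) + x)"

definition two_isometry :: "('a::chilbert \<Rightarrow> 'a) \<Rightarrow> bool" where
  "two_isometry S \<longleftrightarrow>
     (\<lambda>x. adjoint S (adjoint S (S (S x))) - 2 *\<^sub>R adjoint S (S x) + x) = (\<lambda>x. 0)"

text \<open>S in B(K) is a lifting of T in B(H), where H is identified with the subspace V(H) of K
  through the linear isometry V : H -> K.  Under this identification the orthogonal projection
  P_H : K -> H is the adjoint of V, and the lifting condition T P_H = P_H S reads
  T (V* k) = V* (S k).\<close>

definition is_lifting :: "('b::chilbert \<Rightarrow> 'b) \<Rightarrow> ('a::chilbert \<Rightarrow> 'b) \<Rightarrow> ('a \<Rightarrow> 'a) \<Rightarrow> bool" where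
  "is_lifting S V T \<longleftrightarrow>
     bounded_clinear_op S \<and> bounded_clinear_op V \<and> (\<forall>x. norm (V x) = norm x) \<and>
     (\<forall>k. T (adjoint V k) = adjoint V (S k))"

definition complement_in_ker :: "('b::chilbert \<Rightarrow> 'b) \<Rightarrow> ('a::chilbert \<Rightarrow> 'b) \<Rightarrow> bool" where
  "complement_in_ker S V \<longleftrightarrow>
     (\<forall>k. (\<forall>h. cinner k (V h) = 0) \<longrightarrow> adjoint S (S k) - k = 0)"

end

theory Submission
  imports Defs "HOL-Computational_Algebra.Formal_Power_Series"
begin

instance chilbert \<subseteq> banach ..

lemma inner_zero_all:
  fixes z :: "'a::real_inner"
  assumes "\<And>y. inner z y = 0" shows "z = 0"
  using assms[of z] by simp

lemma quad_lin_zero: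
  fixes a b :: real
  assumes "\<And>t. a * t \<le> b * t\<^sup>2" shows "a = 0"
proof (rule ccontr)
  assume a: "a \<noteq> 0"
  define B where "B = \<bar>b\<bar> + 1"
  have B: "B > 0" "\<bar>b\<bar> \<le> B" by (auto simp: B_def)
  define t where "t = a / (2 * B)"
  have "a * t = a\<^sup>2 / (2*B)" by (simp add: t_def power2_eq_square)
  moreover have "b * t\<^sup>2 = b * a\<^sup>2 / (4 * B\<^sup>2)" by (simp add: t_def power_divide power2_eq_square)
  moreover have "b * a\<^sup>2 / (4 * B\<^sup>2) \<le> B * a\<^sup>2 / (4 * B\<^sup>2)"
    using B by (intro divide_right_mono mult_right_mono) auto
  moreover have "B * a\<^sup>2 / (4 * B\<^sup>2) = a\<^sup>2 / (4*B)" using B by (simp add: power2_eq_square)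
  ultimately have "a\<^sup>2 / (2*B) \<le> a\<^sup>2 / (4*B)" using assms[of t] by linarith
  then have "2 * a\<^sup>2 \<le> a\<^sup>2" using B by (simp add: field_simps)
  moreover have "a\<^sup>2 > 0" using a by simp
  ultimately show False by linarith
qed

lemma psd_cs:
  fixes A Bv C :: real
  assumes "\<And>t. 0 \<le> A + 2 * t * Bv + t\<^sup>2 * C" and C: "C \<ge> 0"
  shows "Bv\<^sup>2 \<le> A * C"
proof -
  show ?thesis
  proof (cases "C = 0")
    case True
    have "\<And>t. (- 2 * Bv) * t \<le> A"
    proof -
      fix t have "0 \<le> A + 2 * t * Bv + t\<^sup>2 * C" by (rule assms)
      then show "(- 2 * Bv) * t \<le> A" using True by (simp add: algebra_simps)
    qed
    have "Bv = 0"
    proof (rule ccontr)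
      assume "Bv \<noteq> 0"
      then have "(- 2 * Bv) * ((\<bar>A\<bar> + 1) / (- 2 * Bv)) \<le> A" using \<open>\<And>t. (- 2 * Bv) * t \<le> A\<close> by blast
      then show False using \<open>Bv \<noteq> 0\<close> by simp
    qed
    then show ?thesis using True by simp
  next
    case False
    with C have C: "C > 0" by simp
    have "0 \<le> A + 2 * (- Bv / C) * Bv + (- Bv / C)\<^sup>2 * C" by (rule assms)
    also have "\<dots> = A - Bv\<^sup>2 / C" using C by (simp add: power2_eq_square field_simps)
    finally show ?thesis using C by (simp add: field_simps)
  qed
qed

lemma norm_add_scaled_sq:
  fixes x y :: "'a::real_inner"
  shows "(norm (x + t *\<^sub>R y))\<^sup>2 = (norm x)\<^sup>2 + 2 * t * inner x y + t\<^sup>2 * (norm y)\<^sup>2"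
  unfolding power2_norm_eq_inner
  by (simp add: inner_add_left inner_add_right inner_commute algebra_simps power2_eq_square)

lemma parallelogram:
  fixes a b :: "'a::real_inner"
  shows "(norm (a - b))\<^sup>2 + (norm (a + b))\<^sup>2 = 2 * (norm a)\<^sup>2 + 2 * (norm b)\<^sup>2"
  by (simp add: power2_norm_eq_inner inner_add_left inner_add_right inner_diff_left inner_diff_right inner_commute algebra_simps)

lemma sq_ge_aux:
  fixes s d :: real
  assumes "s \<ge> 2 - d" "s \<ge> 0"
  shows "s\<^sup>2 \<ge> 4 - 4 * d"
proof (cases "2 - d \<ge> 0")
  case True
  then have "(2 - d)\<^sup>2 \<le> s\<^sup>2" using assms by (intro power_mono) auto
  moreover have "(2 - d)\<^sup>2 = 4 - 4 * d + d\<^sup>2" by (simp add: power2_eq_square algebra_simps)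
  moreover have "d\<^sup>2 \<ge> 0" by simp
  ultimately show ?thesis by linarith
next
  case False
  then have "4 - 4 * d < 0" by simp
  moreover have "s\<^sup>2 \<ge> 0" by simp
  ultimately show ?thesis by linarith
qed

lemma riesz:
  fixes f :: "'a::chilbert \<Rightarrow> real"
  assumes bl: "bounded_linear f"
  shows "\<exists>z. \<forall>x. f x = inner z x"
proof (cases "\<forall>x. f x = 0")
  case True then show ?thesis by (intro exI[of _ 0]) simp
next
  case False
  then obtain x0 where x0: "f x0 \<noteq> 0" by auto
  interpret f: bounded_linear f by fact
  obtain K where K: "K > 0" "\<And>x. norm (f x) \<le> norm x * K" using f.pos_bounded by blast
  define U where "U = f ` {x. norm x \<le> 1}"
  define L where "L = Sup U"
  have bdd: "bdd_above U" unfolding U_def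
  proof (rule bdd_aboveI[of _ K])
    fix u assume "u \<in> f ` {x. norm x \<le> 1}"
    then obtain x where x: "norm x \<le> 1" "u = f x" by auto
    have "u \<le> norm (f x)" using x by simp
    also have "\<dots> \<le> norm x * K" by (rule K)
    also have "\<dots> \<le> K" using x K by (simp add: mult_left_le_one_le)
    finally show "u \<le> K" .
  qed
  have "(0::'a) \<in> {x. norm x \<le> 1}" by simp
  then have Une: "U \<noteq> {}" unfolding U_def by blast
  have fle: "f x \<le> L" if "norm x \<le> 1" for x
    unfolding L_def by (rule cSup_upper) (use that bdd in \<open>auto simp: U_def\<close>)
  have absle: "\<bar>f y\<bar> \<le> L * norm y" for y
  proof (cases "y = 0")
    case True
    have "f 0 \<le> L" by (rule fle) simp
    then show ?thesis using True by simp
  next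
    case False
    then have n: "norm y > 0" by simp
    have ny: "norm (y /\<^sub>R norm y) = 1" using n by simp
    have "f (y /\<^sub>R norm y) \<le> L" by (rule fle) (simp only: ny)
    moreover have "f (- (y /\<^sub>R norm y)) \<le> L" by (rule fle) (simp only: norm_minus_cancel ny)
    ultimately have "f y / norm y \<le> L" "- f y / norm y \<le> L"
      by (simp_all add: f.scaleR f.neg divide_inverse mult.commute)
    then have "f y \<le> L * norm y" "- f y \<le> L * norm y" using n by (simp_all add: field_simps)
    then show ?thesis by linarith
  qed
  have Lpos: "L > 0"
  proof -
    define y where "y = (if f x0 > 0 then x0 else - x0) /\<^sub>R norm x0"
    have n: "norm x0 > 0" using x0 by (auto simp: f.zero)
    have "f y = \<bar>f x0\<bar> / norm x0" using x0
      by (auto simp: y_def f.scaleR f.neg divide_inverse mult.commute)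
    then have "f y > 0" using x0 n by simp
    moreover have "f y \<le> L" by (rule fle) (use n in \<open>simp add: y_def\<close>)
    ultimately show ?thesis by simp
  qed
  have "\<forall>n. \<exists>x. norm x \<le> 1 \<and> f x > L - 1 / real (Suc n)"
  proof
    fix n
    have "L - 1 / real (Suc n) < L" by simp
    then have "\<exists>u\<in>U. L - 1 / real (Suc n) < u"
      unfolding L_def using less_cSup_iff[OF Une bdd] by blast
    then show "\<exists>x. norm x \<le> 1 \<and> f x > L - 1 / real (Suc n)" by (auto simp: U_def)
  qed
  then obtain xs where xs: "\<And>n. norm (xs n) \<le> 1" "\<And>n. f (xs n) > L - 1 / real (Suc n)"
    by metis
  have key: "(norm (xs m - xs n))\<^sup>2 \<le> 4 * ((1 / real (Suc m) + 1 / real (Suc n)) / L)" for m n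
  proof -
    define d where "d = (1 / real (Suc m) + 1 / real (Suc n)) / L"
    have "f (xs m + xs n) > 2 * L - (1 / real (Suc m) + 1 / real (Suc n))"
      using xs(2)[of m] xs(2)[of n] by (simp add: f.add)
    moreover have "f (xs m + xs n) \<le> L * norm (xs m + xs n)" using absle[of "xs m + xs n"] by linarith
    moreover have "L * d = 1 / real (Suc m) + 1 / real (Suc n)" using Lpos by (simp add: d_def)
    moreover have "L * (2 - d) = 2 * L - L * d" by (simp add: algebra_simps)
    ultimately have "L * (2 - d) \<le> L * norm (xs m + xs n)" by linarith
    then have "2 - d \<le> norm (xs m + xs n)" using Lpos by simp
    then have "(norm (xs m + xs n))\<^sup>2 \<ge> 4 - 4 * d" by (intro sq_ge_aux) auto
    moreover have "(norm (xs m))\<^sup>2 \<le> 1" "(norm (xs n))\<^sup>2 \<le> 1"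
      using xs(1) by (simp_all add: power_le_one)
    ultimately show ?thesis using parallelogram[of "xs m" "xs n"] unfolding d_def by linarith
  qed
  have "Cauchy xs"
  proof (rule CauchyI)
    fix e :: real assume e: "e > 0"
    then have "e\<^sup>2 * L / 8 > 0" using Lpos by simp
    then obtain N where N: "inverse (real (Suc N)) < e\<^sup>2 * L / 8" using reals_Archimedean by blast
    show "\<exists>M. \<forall>m\<ge>M. \<forall>n\<ge>M. norm (xs m - xs n) < e"
    proof (intro exI allI impI)
      fix m n assume mn: "N \<le> m" "N \<le> n"
      have "1 / real (Suc m) \<le> 1 / real (Suc N)" "1 / real (Suc n) \<le> 1 / real (Suc N)"
        using mn by (simp_all add: frac_le)
      then have "1 / real (Suc m) + 1 / real (Suc n) \<le> 2 / real (Suc N)" by simp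
      then have "4 * ((1 / real (Suc m) + 1 / real (Suc n)) / L) \<le> 4 * ((2 / real (Suc N)) / L)"
        using Lpos by (intro mult_left_mono divide_right_mono) auto
      also have "\<dots> = 8 * inverse (real (Suc N)) / L" by (simp add: divide_inverse)
      also have "\<dots> < e\<^sup>2"
      proof -
        have "8 * inverse (real (Suc N)) < e\<^sup>2 * L" using N by linarith
        then show ?thesis by (subst pos_divide_less_eq[OF Lpos])
      qed
      finally have "(norm (xs m - xs n))\<^sup>2 < e\<^sup>2" using key[of m n] by linarith
      then show "norm (xs m - xs n) < e" using e by (simp add: power_less_imp_less_base)
    qed
  qed
  then obtain x where x: "xs \<longlonglongrightarrow> x" using Cauchy_convergent convergent_def by blast
  have nx: "norm x \<le> 1"
    by (rule LIMSEQ_le_const2[OF tendsto_norm[OF x]]) (use xs(1) in auto)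
  have "(\<lambda>n. L - 1 / real (Suc n)) \<longlonglongrightarrow> L - 0"
    by (intro tendsto_intros LIMSEQ_Suc[OF lim_const_over_n])
  then have lim1: "(\<lambda>n. L - 1 / real (Suc n)) \<longlonglongrightarrow> L" by simp
  have "L \<le> f x"
    by (rule LIMSEQ_le[OF lim1 f.tendsto[OF x]]) (use xs(2) less_imp_le in auto)
  moreover have "f x \<le> L" using fle[OF nx] .
  ultimately have fx: "f x = L" by simp
  have "L \<le> L * norm x" using absle[of x] fx by simp
  then have "norm x = 1" using nx Lpos by simp
  then have nx1: "(norm x)\<^sup>2 = 1" by simp
  have "f y = inner (L *\<^sub>R x) y" for y
  proof -
    have "2 * L * (f y - L * inner x y) = 0"
    proof (rule quad_lin_zero)
      fix t :: real
      have "\<bar>f (x + t *\<^sub>R y)\<bar> \<le> L * norm (x + t *\<^sub>R y)" by (rule absle)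
      then have "(f (x + t *\<^sub>R y))\<^sup>2 \<le> (L * norm (x + t *\<^sub>R y))\<^sup>2"
        by (metis abs_ge_zero power2_abs power_mono)
      also have "\<dots> = L\<^sup>2 * (1 + 2 * t * inner x y + t\<^sup>2 * (norm y)\<^sup>2)"
        by (simp add: power_mult_distrib norm_add_scaled_sq nx1)
      finally have "(L + t * f y)\<^sup>2 \<le> L\<^sup>2 * (1 + 2 * t * inner x y + t\<^sup>2 * (norm y)\<^sup>2)"
        by (simp add: f.add f.scaleR fx)
      then show "2 * L * (f y - L * inner x y) * t \<le> (L\<^sup>2 * (norm y)\<^sup>2 - (f y)\<^sup>2) * t\<^sup>2"
        by (simp add: power2_eq_square algebra_simps)
    qed
    then show ?thesis using Lpos by simp
  qed
  then show ?thesis by blast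
qed

lemma adjoint_exists:
  fixes T :: "'a::chilbert \<Rightarrow> 'b::chilbert"
  assumes "bounded_linear T"
  shows "\<exists>S. \<forall>x y. inner (T x) y = inner x (S y)"
proof -
  have "\<forall>y. \<exists>z. \<forall>x. inner (T x) y = inner x z"
  proof
    fix y
    have "bounded_linear (\<lambda>x. inner (T x) y)"
      using bounded_linear_compose[OF bounded_linear_inner_left assms] .
    then obtain z where "\<forall>x. inner (T x) y = inner z x" using riesz by blast
    then show "\<exists>z. \<forall>x. inner (T x) y = inner x z" by (auto simp: inner_commute)
  qed
  then show ?thesis by metis
qed

lemma adjoint_eq:
  fixes T :: "'a::chilbert \<Rightarrow> 'b::chilbert"
  assumes "bounded_linear T"
  shows "inner (T x) y = inner x (adjoint T y)"
proof -
  let ?P = "\<lambda>S. \<forall>x y. inner (T x) y = inner x (S y)"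
  have "\<exists>!S. ?P S"
  proof -
    obtain S where S: "?P S" using adjoint_exists[OF assms] by blast
    have "S' = S" if "?P S'" for S'
    proof
      fix y
      show "S' y = S y"
      proof (rule inner_zero_all[of "S' y - S y", simplified])
        fix w
        show "inner (S' y - S y) w = 0"
        proof -
          have "inner w (S' y) = inner (T w) y" using that by simp
          moreover have "inner w (S y) = inner (T w) y" using S by simp
          ultimately show ?thesis by (simp add: inner_diff_left inner_diff_right inner_commute[of _ w])
        qed
      qed
    qed
    then show ?thesis using S by blast
  qed
  then have "?P (adjoint T)" unfolding adjoint_def by (rule theI')
  then show ?thesis by blast
qed



lemma norm_le_sqrt:
  fixes x :: "'a::real_normed_vector" and y :: "'b::real_normed_vector"
  assumes "(norm y)\<^sup>2 \<le> A * (norm x)\<^sup>2"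
  shows "norm y \<le> sqrt A * norm x"
proof -
  have "norm y = sqrt ((norm y)\<^sup>2)" by simp
  also have "\<dots> \<le> sqrt (A * (norm x)\<^sup>2)" using assms by (rule real_sqrt_le_mono)
  also have "\<dots> = sqrt A * norm x" by (simp add: real_sqrt_mult)
  finally show ?thesis .
qed

lemma isometry_inner:
  fixes V :: "'a::real_inner \<Rightarrow> 'b::real_inner"
  assumes "linear V" "\<And>x. norm (V x) = norm x"
  shows "inner (V x) (V y) = inner x y"
proof -
  interpret V: linear V by fact
  have "(norm (V x + V y))\<^sup>2 = (norm (x + y))\<^sup>2" using assms(2)[of "x + y"] by (simp add: V.add)
  moreover have "(norm (V x))\<^sup>2 = (norm x)\<^sup>2" "(norm (V y))\<^sup>2 = (norm y)\<^sup>2" using assms(2) by simp_all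
  ultimately show ?thesis
    unfolding power2_norm_eq_inner by (simp add: inner_add_left inner_add_right inner_commute)
qed

lemma bounded_linear_funpow:
  fixes T :: "'a::real_normed_vector \<Rightarrow> 'a"
  assumes "bounded_linear T" shows "bounded_linear (T ^^ n)"
proof (induction n)
  case 0
  have "T^^0 = (\<lambda>x. x)" by (simp add: fun_eq_iff)
  then show ?case using bounded_linear_ident by metis
next
  case (Suc n)
  show ?case using bounded_linear_compose[OF assms Suc.IH] by (simp add: o_def)
qed

lemma part1:
  fixes T :: "'a::chilbert \<Rightarrow> 'a" and S :: "'b::chilbert \<Rightarrow> 'b"
  assumes "bounded_clinear_op T" "is_lifting S V T" "two_isometry S"
  shows "bdd_above (range (\<lambda>n. (onorm (T ^^ n))\<^sup>2 / real (n + 1)))"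
proof -
  have Tbl: "bounded_linear T" using assms(1) by (simp add: bounded_clinear_op_def)
  have Sbl: "bounded_linear S" and Vbl: "bounded_linear V" and Vn: "\<And>x. norm (V x) = norm x"
    and lift: "\<And>k. T (adjoint V k) = adjoint V (S k)"
    using assms(2) by (auto simp: is_lifting_def bounded_clinear_op_def)
  have Sadj: "inner (S a) b = inner a (adjoint S b)" for a b using adjoint_eq[OF Sbl] .
  have Vadj: "inner (V a) b = inner a (adjoint V b)" for a b using adjoint_eq[OF Vbl] .
  have two: "(norm (S (S x)))\<^sup>2 - 2 * (norm (S x))\<^sup>2 + (norm x)\<^sup>2 = 0" for x
  proof -
    have "adjoint S (adjoint S (S (S x))) - 2 *\<^sub>R adjoint S (S x) + x = 0"
      using assms(3) unfolding two_isometry_def by metis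
    then have "inner x (adjoint S (adjoint S (S (S x))) - 2 *\<^sub>R adjoint S (S x) + x) = 0" by simp
    moreover have "inner x (adjoint S (adjoint S (S (S x)))) = inner (S (S x)) (S (S x))"
      by (simp add: Sadj[symmetric])
    moreover have "inner x (adjoint S (S x)) = inner (S x) (S x)" by (simp add: Sadj[symmetric])
    ultimately show ?thesis
      by (simp add: inner_add_right inner_diff_right power2_norm_eq_inner)
  qed
  have lin: "(norm ((S^^n) z))\<^sup>2 = (norm z)\<^sup>2 + real n * ((norm (S z))\<^sup>2 - (norm z)\<^sup>2)
      \<and> (norm ((S^^Suc n) z))\<^sup>2 = (norm z)\<^sup>2 + real (Suc n) * ((norm (S z))\<^sup>2 - (norm z)\<^sup>2)" for n z
  proof (induction n)
    case 0 then show ?case by simp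
  next
    case (Suc n)
    have "(norm ((S^^Suc (Suc n)) z))\<^sup>2 = 2 * (norm ((S^^Suc n) z))\<^sup>2 - (norm ((S^^n) z))\<^sup>2"
      using two[of "(S^^n) z"] by simp
    then show ?case using Suc by (simp add: algebra_simps)
  qed
  define KS where "KS = onorm S"
  define C where "C = 1 + KS\<^sup>2"
  have C: "C \<ge> 1" by (simp add: C_def)
  have Spow: "(norm ((S^^n) z))\<^sup>2 \<le> real (n + 1) * C * (norm z)\<^sup>2" for n z
  proof -
    have "norm (S z) \<le> KS * norm z" unfolding KS_def by (rule onorm[OF Sbl])
    then have "(norm (S z))\<^sup>2 \<le> (KS * norm z)\<^sup>2" by (intro power_mono) auto
    then have "(norm (S z))\<^sup>2 \<le> KS\<^sup>2 * (norm z)\<^sup>2" by (simp add: power_mult_distrib)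
    then have "(norm ((S^^n) z))\<^sup>2 \<le> (norm z)\<^sup>2 + real n * (KS\<^sup>2 * (norm z)\<^sup>2)"
      using lin[of n z] by (smt (verit) mult_left_mono of_nat_0_le_iff zero_le_power2)
    also have "\<dots> \<le> real (n + 1) * C * (norm z)\<^sup>2"
      by (simp add: C_def algebra_simps)
    finally show ?thesis .
  qed
  have VV: "adjoint V (V x) = x" for x
  proof (rule inner_zero_all[of "adjoint V (V x) - x", simplified])
    fix y
    have "inner (adjoint V (V x)) y = inner y (adjoint V (V x))" by (rule inner_commute)
    also have "\<dots> = inner (V y) (V x)" by (rule Vadj[symmetric])
    also have "\<dots> = inner y x" using isometry_inner[OF bounded_linear.linear[OF Vbl] Vn] .
    finally show "inner (adjoint V (V x) - x) y = 0" by (metis inner_commute inner_diff_left diff_self)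
  qed
  have Vs: "norm (adjoint V k) \<le> norm k" for k
  proof -
    have "(norm (adjoint V k))\<^sup>2 = inner (V (adjoint V k)) k"
      by (simp only: Vadj power2_norm_eq_inner)
    also have "\<dots> \<le> norm (V (adjoint V k)) * norm k" by (rule norm_cauchy_schwarz)
    also have "\<dots> = norm (adjoint V k) * norm k" by (simp add: Vn)
    finally have "norm (adjoint V k) * norm (adjoint V k) \<le> norm (adjoint V k) * norm k"
      by (simp add: power2_eq_square)
    then show ?thesis
      by (cases "adjoint V k = 0") auto
  qed
  have Tpow: "(T^^n) (adjoint V k) = adjoint V ((S^^n) k)" for n k
    by (induction n) (auto simp: lift)
  have Tb: "(onorm (T ^^ n))\<^sup>2 / real (n + 1) \<le> C" for n
  proof -
    have "norm ((T^^n) x) \<le> sqrt (real (n + 1) * C) * norm x" for x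
    proof (rule norm_le_sqrt)
      have "norm ((T^^n) x) = norm (adjoint V ((S^^n) (V x)))" by (simp add: Tpow[symmetric] VV)
      also have "\<dots> \<le> norm ((S^^n) (V x))" by (rule Vs)
      finally have "(norm ((T^^n) x))\<^sup>2 \<le> (norm ((S^^n) (V x)))\<^sup>2" by (intro power_mono) auto
      also have "\<dots> \<le> real (n + 1) * C * (norm (V x))\<^sup>2" by (rule Spow)
      finally show "(norm ((T^^n) x))\<^sup>2 \<le> real (n + 1) * C * (norm x)\<^sup>2" by (simp add: Vn)
    qed
    then have "onorm (T^^n) \<le> sqrt (real (n + 1) * C)"
      using C by (intro onorm_bound) auto
    then have "(onorm (T^^n))\<^sup>2 \<le> (sqrt (real (n + 1) * C))\<^sup>2"
      by (intro power_mono onorm_pos_le bounded_linear_funpow Tbl)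
    also have "\<dots> = real (n + 1) * C" using C by simp
    finally show ?thesis by (simp add: divide_le_eq algebra_simps)
  qed
  then show ?thesis by (intro bdd_aboveI[of _ C]) auto
qed



lemma Cauchy_product_sums_bil:
  fixes a :: "nat \<Rightarrow> 'a::banach" and b :: "nat \<Rightarrow> 'b::banach"
    and prod :: "'a \<Rightarrow> 'b \<Rightarrow> 'c::banach"
  assumes bb: "bounded_bilinear prod"
    and a: "summable (\<lambda>k. norm (a k))"
    and b: "summable (\<lambda>k. norm (b k))"
  shows "(\<lambda>k. \<Sum>i\<le>k. prod (a i) (b (k - i))) sums (prod (\<Sum>k. a k) (\<Sum>k. b k))"
proof -
  interpret bounded_bilinear prod by fact
  obtain K where K: "K > 0" "\<And>x y. norm (prod x y) \<le> norm x * norm y * K"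
    using pos_bounded by blast
  let ?S1 = "\<lambda>n::nat. {..<n} \<times> {..<n}"
  let ?S2 = "\<lambda>n::nat. {(i,j). i + j < n}"
  have S1_mono: "\<And>m n. m \<le> n \<Longrightarrow> ?S1 m \<subseteq> ?S1 n" by auto
  have S2_le_S1: "\<And>n. ?S2 n \<subseteq> ?S1 n" by auto
  have S1_le_S2: "\<And>n. ?S1 (n div 2) \<subseteq> ?S2 n" by auto
  have finite_S1: "\<And>n. finite (?S1 n)" by simp
  with S2_le_S1 have finite_S2: "\<And>n. finite (?S2 n)" by (rule finite_subset)
  let ?g = "\<lambda>(i,j). prod (a i) (b j)"
  let ?f = "\<lambda>(i,j). (K * norm (a i)) * norm (b j)"
  have f_nonneg: "\<And>x. 0 \<le> ?f x" using K by auto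
  then have norm_sum_f: "\<And>A. norm (sum ?f A) = sum ?f A"
    unfolding real_norm_def
    by (simp only: abs_of_nonneg sum_nonneg [rule_format])
  have "(\<lambda>n. prod (\<Sum>k<n. a k) (\<Sum>k<n. b k)) \<longlonglongrightarrow> prod (\<Sum>k. a k) (\<Sum>k. b k)"
    by (intro tendsto summable_LIMSEQ summable_norm_cancel [OF a] summable_norm_cancel [OF b])
  moreover have "prod (\<Sum>k<n. a k) (\<Sum>k<n. b k) = sum ?g (?S1 n)" for n
  proof -
    have "prod (\<Sum>k<n. a k) (\<Sum>k<n. b k) = (\<Sum>i<n. prod (a i) (\<Sum>k<n. b k))" by (rule sum_left)
    also have "\<dots> = (\<Sum>i<n. \<Sum>j<n. prod (a i) (b j))" by (simp only: sum_right)
    also have "\<dots> = sum ?g (?S1 n)" by (rule sum.cartesian_product)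
    finally show ?thesis .
  qed
  ultimately have 1: "(\<lambda>n. sum ?g (?S1 n)) \<longlonglongrightarrow> prod (\<Sum>k. a k) (\<Sum>k. b k)" by simp
  have a': "summable (\<lambda>k. K * norm (a k))" using a by (rule summable_mult)
  have "(\<lambda>n. (\<Sum>k<n. K * norm (a k)) * (\<Sum>k<n. norm (b k))) \<longlonglongrightarrow> (\<Sum>k. K * norm (a k)) * (\<Sum>k. norm (b k))"
    using a' b by (intro tendsto_mult summable_LIMSEQ)
  then have "(\<lambda>n. sum ?f (?S1 n)) \<longlonglongrightarrow> (\<Sum>k. K * norm (a k)) * (\<Sum>k. norm (b k))"
    by (simp only: sum_product sum.cartesian_product)
  then have "convergent (\<lambda>n. sum ?f (?S1 n))"
    by (rule convergentI)
  then have Cauchy: "Cauchy (\<lambda>n. sum ?f (?S1 n))"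
    by (rule convergent_Cauchy)
  have "Zfun (\<lambda>n. sum ?f (?S1 n - ?S2 n)) sequentially"
  proof (rule ZfunI, simp only: eventually_sequentially norm_sum_f)
    fix r :: real
    assume r: "0 < r"
    from CauchyD [OF Cauchy r] obtain N
      where "\<forall>m\<ge>N. \<forall>n\<ge>N. norm (sum ?f (?S1 m) - sum ?f (?S1 n)) < r" ..
    then have "\<And>m n. N \<le> n \<Longrightarrow> n \<le> m \<Longrightarrow> norm (sum ?f (?S1 m - ?S1 n)) < r"
      by (simp only: sum_diff finite_S1 S1_mono)
    then have N: "\<And>m n. N \<le> n \<Longrightarrow> n \<le> m \<Longrightarrow> sum ?f (?S1 m - ?S1 n) < r"
      by (simp only: norm_sum_f)
    show "\<exists>N. \<forall>n\<ge>N. sum ?f (?S1 n - ?S2 n) < r"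
    proof (intro exI allI impI)
      fix n
      assume "2 * N \<le> n"
      then have n: "N \<le> n div 2" by simp
      have "sum ?f (?S1 n - ?S2 n) \<le> sum ?f (?S1 n - ?S1 (n div 2))"
        by (intro sum_mono2 finite_Diff finite_S1 f_nonneg Diff_mono subset_refl S1_le_S2)
      also have "\<dots> < r"
        using n div_le_dividend by (rule N)
      finally show "sum ?f (?S1 n - ?S2 n) < r" .
    qed
  qed
  note zf = this
  have bnd: "norm (sum ?g (?S1 n - ?S2 n)) \<le> norm (sum ?f (?S1 n - ?S2 n))" for n
  proof -
    have "norm (sum ?g (?S1 n - ?S2 n)) \<le> (\<Sum>x\<in>?S1 n - ?S2 n. norm (?g x))" by (rule norm_sum)
    also have "\<dots> \<le> sum ?f (?S1 n - ?S2 n)"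
    proof (rule sum_mono)
      fix x assume "x \<in> ?S1 n - ?S2 n"
      obtain i j where x: "x = (i, j)" by (cases x)
      show "norm (?g x) \<le> ?f x" using K(2)[of "a i" "b j"] by (simp add: x algebra_simps)
    qed
    also have "\<dots> \<le> norm (sum ?f (?S1 n - ?S2 n))" by simp
    finally show ?thesis by simp
  qed
  have "Zfun (\<lambda>n. sum ?g (?S1 n - ?S2 n)) sequentially"
    by (rule Zfun_le[OF zf]) (use bnd in blast)
  then have 2: "(\<lambda>n. sum ?g (?S1 n) - sum ?g (?S2 n)) \<longlonglongrightarrow> 0"
    unfolding tendsto_Zfun_iff diff_0_right
    by (simp only: sum_diff finite_S1 S2_le_S1)
  with 1 have "(\<lambda>n. sum ?g (?S2 n)) \<longlonglongrightarrow> prod (\<Sum>k. a k) (\<Sum>k. b k)"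
    by (rule Lim_transform2)
  then show ?thesis
    by (simp only: sums_def sum.triangle_reindex)
qed



lemma cc_poch: "(-1)^k * ((1/2::real) gchoose k) = pochhammer (-1/2) k / fact k"
proof -
  have "(-1::real)^k * (-1)^k = 1" by (simp add: power_mult_distrib[symmetric])
  then show ?thesis by (simp add: gbinomial_pochhammer mult.assoc[symmetric])
qed

lemma cc_nonpos:
  assumes "k \<ge> 1" shows "(-1)^k * ((1/2::real) gchoose k) \<le> 0"
proof -
  obtain j where k: "k = Suc j" using assms by (cases k) auto
  have "pochhammer (-1/2::real) (Suc j) = (-1/2) * pochhammer (1/2) j"
    by (simp add: pochhammer_rec)
  moreover have "pochhammer (1/2::real) j > 0" by (rule pochhammer_pos) simp
  ultimately have "pochhammer (-1/2::real) (Suc j) \<le> 0" by simp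
  then show ?thesis unfolding cc_poch k by (simp add: divide_nonpos_pos)
qed

lemma cc_partial: "(\<Sum>k\<le>m. (-1)^k * ((1/2::real) gchoose k)) \<ge> 0"
proof -
  have "(\<Sum>k\<le>m. (-1)^k * ((1/2::real) gchoose k)) = (\<Sum>k\<le>m. ((1/2::real) gchoose k) * (-1)^k)"
    by (simp add: mult.commute)
  also have "\<dots> = (-1)^m * ((1/2 - 1) gchoose m)" by (rule gbinomial_sum_lower_neg)
  also have "\<dots> = (-1)^m * ((-(1/2)) gchoose m)" by simp
  also have "\<dots> = pochhammer (1/2) m / fact m"
  proof -
    have "(-1::real)^m * (-1)^m = 1" by (simp add: power_mult_distrib[symmetric])
    then show ?thesis by (simp add: gbinomial_pochhammer mult.assoc[symmetric])
  qed
  also have "\<dots> \<ge> 0" by (intro divide_nonneg_pos less_imp_le pochhammer_pos) auto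
  finally show ?thesis .
qed

lemma cc_summable: "summable (\<lambda>k. \<bar>(-1)^k * ((1/2::real) gchoose k)\<bar>)"
proof (rule summableI_nonneg_bounded[where x = 2])
  fix n
  define c where "c k = (-1)^k * ((1/2::real) gchoose k)" for k
  have c0: "c 0 = 1" by (simp add: c_def)
  have ab: "\<bar>c k\<bar> = (if k = 0 then 2 else 0) - c k" for k
    using cc_nonpos[of k] c0 by (cases "k = 0") (auto simp: c_def)
  show "(\<Sum>k<n. \<bar>(-1)^k * ((1/2::real) gchoose k)\<bar>) \<le> 2"
  proof (cases n)
    case 0 then show ?thesis by simp
  next
    case (Suc m)
    have "(\<Sum>k<n. \<bar>c k\<bar>) = (\<Sum>k<n. (if k = 0 then 2 else 0)) - (\<Sum>k<n. c k)"
      by (simp add: ab sum_subtractf)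
    also have "(\<Sum>k<n. (if k = 0 then 2 else (0::real))) = 2"
      using Suc by (simp add: sum.delta)
    also have "(\<Sum>k<n. c k) = (\<Sum>k\<le>m. c k)" using Suc by (simp add: lessThan_Suc_atMost)
    finally have "(\<Sum>k<n. \<bar>c k\<bar>) = 2 - (\<Sum>k\<le>m. c k)" .
    moreover have "(\<Sum>k\<le>m. c k) \<ge> 0" unfolding c_def by (rule cc_partial)
    ultimately show ?thesis by (simp add: c_def)
  qed
qed simp

lemma cc_conv:
  "(\<Sum>i\<le>k. ((-1)^i * ((1/2::real) gchoose i)) * ((-1)^(k-i) * ((1/2::real) gchoose (k-i))))
     = (if k = 0 then 1 else if k = 1 then -1 else 0)"
proof -
  have "(\<Sum>i\<le>k. ((-1)^i * ((1/2::real) gchoose i)) * ((-1)^(k-i) * ((1/2::real) gchoose (k-i))))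
      = (\<Sum>i\<le>k. (-1)^k * (((1/2::real) gchoose i) * ((1/2::real) gchoose (k-i))))"
  proof (rule sum.cong)
    fix i assume "i \<in> {..k}"
    then have "(-1::real)^i * (-1)^(k-i) = (-1)^k" by (simp add: power_add[symmetric])
    then show "((-1)^i * ((1/2::real) gchoose i)) * ((-1)^(k-i) * ((1/2::real) gchoose (k-i)))
        = (-1)^k * (((1/2::real) gchoose i) * ((1/2::real) gchoose (k-i)))"
      by (simp only: mult_ac) (simp only: mult.assoc[symmetric])
  qed simp
  also have "\<dots> = (-1)^k * (\<Sum>i\<in>{0..k}. ((1/2::real) gchoose i) * ((1/2::real) gchoose (k-i)))"
    by (simp add: sum_distrib_left atLeast0AtMost)
  also have "\<dots> = (-1)^k * ((1/2 + 1/2::real) gchoose k)" by (simp only: gbinomial_Vandermonde)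
  also have "((1/2 + 1/2::real) gchoose k) = of_nat (1 choose k)"
    by (simp add: binomial_gbinomial)
  finally show ?thesis
    by (cases k; cases "k - 1") auto
qed

lemma form_cs:
  fixes B :: "'a::real_vector \<Rightarrow> 'a \<Rightarrow> real"
  assumes add: "\<And>x y z. B (x + y) z = B x z + B y z"
    and scl: "\<And>r x y. B (r *\<^sub>R x) y = r * B x y"
    and sym: "\<And>x y. B x y = B y x"
    and pos: "\<And>x. B x x \<ge> 0"
  shows "(B x y)\<^sup>2 \<le> B x x * B y y"
proof (rule psd_cs)
  fix t
  have "B (x + t *\<^sub>R y) (x + t *\<^sub>R y) = B x x + 2 * t * B x y + t\<^sup>2 * B y y"
  proof -
    have "B (x + t *\<^sub>R y) (x + t *\<^sub>R y) = B x (x + t *\<^sub>R y) + t * B y (x + t *\<^sub>R y)"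
      by (simp add: add scl)
    also have "B x (x + t *\<^sub>R y) = B x x + t * B y x"
      by (simp only: sym[of x "x + t *\<^sub>R y"] add scl)
    also have "B y (x + t *\<^sub>R y) = B x y + t * B y y"
      by (simp only: sym[of y "x + t *\<^sub>R y"] add scl)
    finally show ?thesis by (simp add: sym[of y x] power2_eq_square algebra_simps)
  qed
  then show "0 \<le> B x x + 2 * t * B x y + t\<^sup>2 * B y y" using pos by metis
qed (rule pos)

lemma imult_zero [simp]: "imult (0::'a::chilbert) = 0"
  using imult_scaleR[of 0 "0::'a"] by simp

lemma imult_minus: "imult (- x) = - imult (x::'a::chilbert)"
  using imult_scaleR[of "-1" x] by simp

lemma imult_diff: "imult (x - y) = imult x - imult (y::'a::chilbert)"
  using imult_add[of x "- y"] by (simp add: imult_minus)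

lemma bl_imult: "bounded_linear (imult :: 'a::chilbert \<Rightarrow> 'a)"
  by (rule bounded_linear_intro[where K = 1]) (auto simp: imult_add imult_scaleR)

lemma inner_imult_left: "inner (imult x) y = - inner x (imult (y::'a::chilbert))"
proof -
  have "inner (imult x) y = inner (imult (imult x)) (imult y)" by (simp add: inner_imult_imult)
  then show ?thesis by (simp add: imult_imult)
qed



lemma comp_scaleR: "(a *\<^sub>R A) o\<^sub>L (b *\<^sub>R B) = (a * b) *\<^sub>R (A o\<^sub>L B)"
  by (rule blinfun_eqI) (simp add: scaleR_blinfun.rep_eq blinfun.scaleR_right)

lemma sqrt_op:
  fixes P :: "'a::chilbert \<Rightarrow> 'a"
  assumes Pbl: "bounded_linear P"
    and Psa: "\<And>h g. inner (P h) g = inner h (P g)"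
    and Ppos: "\<And>h. 0 \<le> inner (P h) h"
    and Pi: "\<And>h. P (imult h) = imult (P h)"
  shows "\<exists>R :: 'a \<Rightarrow> 'a. bounded_linear R \<and> (\<forall>h. R (imult h) = imult (R h))
              \<and> (\<forall>h g. inner (R h) (R g) = inner (P h) g)"
proof -
  interpret P: bounded_linear P by fact
  obtain K where K: "K > 0" "\<And>x. norm (P x) \<le> norm x * K" using P.pos_bounded by blast
  have Pq: "inner (P h) h \<le> K * (norm h)\<^sup>2" for h
  proof -
    have "inner (P h) h \<le> norm (P h) * norm h" by (rule norm_cauchy_schwarz)
    also have "\<dots> \<le> (norm h * K) * norm h" using K(2)[of h] by (intro mult_right_mono) auto
    finally show ?thesis by (simp add: power2_eq_square algebra_simps)
  qed
  define Xf where "Xf h = h - (1/K) *\<^sub>R P h" for h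
  have Xbl: "bounded_linear Xf" unfolding Xf_def
    by (intro bounded_linear_sub bounded_linear_ident bounded_linear_compose[OF bounded_linear_scaleR_right Pbl])
  interpret X: bounded_linear Xf by fact
  have Xsa: "inner (Xf h) g = inner h (Xf g)" for h g
    by (simp add: Xf_def inner_diff_left inner_diff_right Psa)
  have Xpos: "0 \<le> inner (Xf h) h" for h
  proof -
    have "inner (Xf h) h = (norm h)\<^sup>2 - (1/K) * inner (P h) h"
      by (simp add: Xf_def inner_diff_left power2_norm_eq_inner)
    moreover have "(1/K) * inner (P h) h \<le> (1/K) * (K * (norm h)\<^sup>2)"
      using Pq[of h] K by (intro mult_left_mono) auto
    moreover have "(1/K) * (K * (norm h)\<^sup>2) = (norm h)\<^sup>2" using K by simp
    ultimately show ?thesis by linarith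
  qed
  have Xle: "inner (Xf h) h \<le> (norm h)\<^sup>2" for h
  proof -
    have "inner (Xf h) h = (norm h)\<^sup>2 - (1/K) * inner (P h) h"
      by (simp add: Xf_def inner_diff_left power2_norm_eq_inner)
    moreover have "0 \<le> (1/K) * inner (P h) h" using Ppos[of h] K by simp
    ultimately show ?thesis by linarith
  qed
  have Xcs: "(inner (Xf h) g)\<^sup>2 \<le> inner (Xf h) h * inner (Xf g) g" for h g
  proof (rule form_cs[where B = "\<lambda>h g. inner (Xf h) g"])
    show "\<And>x y z. inner (Xf (x + y)) z = inner (Xf x) z + inner (Xf y) z"
      by (simp add: X.add inner_add_left)
    show "\<And>r x y. inner (Xf (r *\<^sub>R x)) y = r * inner (Xf x) y"
      by (simp add: X.scaleR)
    show "\<And>x y. inner (Xf x) y = inner (Xf y) x"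
      by (metis Xsa inner_commute)
    show "\<And>x. 0 \<le> inner (Xf x) x" by (rule Xpos)
  qed
  have Xn: "norm (Xf h) \<le> norm h" for h
  proof (cases "Xf h = 0")
    case True then show ?thesis by simp
  next
    case False
    let ?w = "Xf h"
    have "((norm ?w)\<^sup>2)\<^sup>2 = (inner (Xf h) ?w)\<^sup>2" by (simp add: power2_norm_eq_inner)
    also have "\<dots> \<le> inner (Xf h) h * inner (Xf ?w) ?w" by (rule Xcs)
    also have "\<dots> \<le> (norm h)\<^sup>2 * (norm ?w)\<^sup>2"
      by (rule mult_mono[OF Xle Xle]) (simp_all add: Xpos)
    finally have "(norm ?w)\<^sup>2 * (norm ?w)\<^sup>2 \<le> (norm h)\<^sup>2 * (norm ?w)\<^sup>2"
      by (simp add: power2_eq_square)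
    moreover have "(norm ?w)\<^sup>2 > 0" using False by simp
    ultimately have "(norm ?w)\<^sup>2 \<le> (norm h)\<^sup>2" by (rule mult_right_le_imp_le)
    then show ?thesis by (rule power2_le_imp_le) simp
  qed
  have Xi: "Xf (imult h) = imult (Xf h)" for h
    by (simp add: Xf_def Pi imult_diff imult_scaleR)
  have Xkbl: "bounded_linear (Xf^^k)" for k by (rule bounded_linear_funpow[OF Xbl])
  define Xp where "Xp k = Blinfun (Xf^^k)" for k
  have Xp_apply: "blinfun_apply (Xp k) = Xf^^k" for k
    unfolding Xp_def by (rule bounded_linear_Blinfun_apply[OF Xkbl])
  have Xpn: "norm ((Xf^^k) h) \<le> norm h" for k h
    by (induction k) (auto intro: order_trans[OF Xn])
  have Xpnorm: "norm (Xp k) \<le> 1" for k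
    by (rule norm_blinfun_bound) (auto simp: Xp_apply Xpn)
  have Xp_sa: "inner ((Xf^^k) h) g = inner h ((Xf^^k) g)" for k h g
  proof (induction k arbitrary: g)
    case 0 then show ?case by simp
  next
    case (Suc k)
    have "inner ((Xf^^Suc k) h) g = inner ((Xf^^k) h) (Xf g)" by (simp add: Xsa)
    also have "\<dots> = inner h ((Xf^^k) (Xf g))" by (rule Suc.IH)
    also have "(Xf^^k) (Xf g) = (Xf^^Suc k) g" by (simp add: funpow_swap1)
    finally show ?case .
  qed
  have Xp_i: "(Xf^^k) (imult h) = imult ((Xf^^k) h)" for k h
    by (induction k) (auto simp: Xi)
  define cc where "cc k = (-1)^k * ((1/2::real) gchoose k)" for k
  have ccs: "summable (\<lambda>k. \<bar>cc k\<bar>)" unfolding cc_def by (rule cc_summable)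
  have sumn: "summable (\<lambda>k. norm (cc k *\<^sub>R Xp k))"
  proof (rule summable_comparison_test[OF _ ccs])
    show "\<exists>N. \<forall>n\<ge>N. norm (norm (cc n *\<^sub>R Xp n)) \<le> \<bar>cc n\<bar>"
      using Xpnorm by (auto intro!: exI[of _ 0] mult_left_le)
  qed
  define R0 where "R0 = (\<Sum>k. cc k *\<^sub>R Xp k)"
  have R0sums: "(\<lambda>k. cc k *\<^sub>R Xp k) sums R0"
    unfolding R0_def by (rule summable_sums[OF summable_norm_cancel[OF sumn]])
  have blap: "bounded_linear (\<lambda>F. blinfun_apply F h)" for h :: 'a
    by (rule bounded_bilinear.bounded_linear_left[OF bounded_bilinear_blinfun_apply])
  have R0ap: "(\<lambda>k. cc k *\<^sub>R (Xf^^k) h) sums blinfun_apply R0 h" for h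
    using bounded_linear.sums[OF blap R0sums, of h] by (simp add: Xp_apply scaleR_blinfun.rep_eq)
  have cp: "(\<lambda>k. \<Sum>i\<le>k. (cc i *\<^sub>R Xp i) o\<^sub>L (cc (k - i) *\<^sub>R Xp (k - i))) sums (R0 o\<^sub>L R0)"
    unfolding R0_def
    by (rule Cauchy_product_sums_bil[OF bounded_bilinear_blinfun_compose sumn sumn])
  have eqk: "(\<Sum>i\<le>k. (cc i *\<^sub>R Xp i) o\<^sub>L (cc (k - i) *\<^sub>R Xp (k - i)))
      = (if k = 0 then 1 else if k = 1 then -1 else 0) *\<^sub>R Xp k" for k
  proof -
    have "(\<Sum>i\<le>k. (cc i *\<^sub>R Xp i) o\<^sub>L (cc (k - i) *\<^sub>R Xp (k - i)))
        = (\<Sum>i\<le>k. (cc i * cc (k - i)) *\<^sub>R Xp k)"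
    proof (rule sum.cong)
      fix i assume "i \<in> {..k}"
      then have "i + (k - i) = k" by simp
      then have "Xf^^k = Xf^^(i + (k - i))" by simp
      then have "Xf^^k = Xf^^i \<circ> Xf^^(k-i)" by (simp only: funpow_add)
      then have "Xp i o\<^sub>L Xp (k - i) = Xp k"
        by (intro blinfun_eqI) (simp add: Xp_apply)
      then show "(cc i *\<^sub>R Xp i) o\<^sub>L (cc (k - i) *\<^sub>R Xp (k - i)) = (cc i * cc (k - i)) *\<^sub>R Xp k"
        by (simp only: comp_scaleR)
    qed simp
    also have "\<dots> = (\<Sum>i\<le>k. cc i * cc (k - i)) *\<^sub>R Xp k" by (rule scaleR_sum_left[symmetric])
    also have "(\<Sum>i\<le>k. cc i * cc (k - i)) = (if k = 0 then 1 else if k = 1 then -1 else 0)"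
      unfolding cc_def by (rule cc_conv)
    finally show ?thesis .
  qed
  have s1: "(\<lambda>k. (if k = 0 then 1 else if k = 1 then -1 else 0) *\<^sub>R Xp k) sums (R0 o\<^sub>L R0)"
    using cp by (simp only: eqk)
  have s2: "(\<lambda>k. (if k = 0 then 1 else if k = 1 then -1 else 0) *\<^sub>R Xp k) sums
      (\<Sum>k\<in>{0,1}. (if k = 0 then 1 else if k = 1 then -1 else 0) *\<^sub>R Xp k)"
    by (rule sums_finite) auto
  have "R0 o\<^sub>L R0 = Xp 0 - Xp 1" using sums_unique2[OF s1 s2] by simp
  then have R0R0: "blinfun_apply R0 (blinfun_apply R0 h) = (1/K) *\<^sub>R P h" for h
  proof -
    assume "R0 o\<^sub>L R0 = Xp 0 - Xp 1"
    then have "blinfun_apply (R0 o\<^sub>L R0) h = blinfun_apply (Xp 0 - Xp 1) h" by simp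
    then show ?thesis by (simp add: Xp_apply minus_blinfun.rep_eq Xf_def)
  qed
  have R0sa: "inner (blinfun_apply R0 h) g = inner h (blinfun_apply R0 g)" for h g
  proof -
    have "(\<lambda>k. inner (cc k *\<^sub>R (Xf^^k) h) g) sums inner (blinfun_apply R0 h) g"
      by (rule bounded_linear.sums[OF bounded_linear_inner_left R0ap])
    moreover have "(\<lambda>k. inner h (cc k *\<^sub>R (Xf^^k) g)) sums inner h (blinfun_apply R0 g)"
      by (rule bounded_linear.sums[OF bounded_linear_inner_right R0ap])
    moreover have "(\<lambda>k. inner (cc k *\<^sub>R (Xf^^k) h) g) = (\<lambda>k. inner h (cc k *\<^sub>R (Xf^^k) g))"
      by (simp add: Xp_sa)
    ultimately show ?thesis using sums_unique2 by metis
  qed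
  have R0i: "blinfun_apply R0 (imult h) = imult (blinfun_apply R0 h)" for h
  proof -
    have "(\<lambda>k. imult (cc k *\<^sub>R (Xf^^k) h)) sums imult (blinfun_apply R0 h)"
      by (rule bounded_linear.sums[OF bl_imult R0ap])
    moreover have "(\<lambda>k. imult (cc k *\<^sub>R (Xf^^k) h)) = (\<lambda>k. cc k *\<^sub>R (Xf^^k) (imult h))"
      by (simp add: Xp_i imult_scaleR)
    ultimately show ?thesis using R0ap[of "imult h"] sums_unique2 by metis
  qed
  define R where "R h = sqrt K *\<^sub>R blinfun_apply R0 h" for h
  have "bounded_linear R" unfolding R_def
    by (rule bounded_linear_compose[OF bounded_linear_scaleR_right blinfun.bounded_linear_right])
  moreover have "\<forall>h. R (imult h) = imult (R h)" by (simp add: R_def R0i imult_scaleR)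
  moreover have "\<forall>h g. inner (R h) (R g) = inner (P h) g"
  proof (intro allI)
    fix h g
    have "inner (R h) (R g) = K * inner (blinfun_apply R0 h) (blinfun_apply R0 g)"
      using K by (simp add: R_def)
    also have "\<dots> = K * inner h ((1/K) *\<^sub>R P g)" by (simp add: R0sa R0R0)
    also have "\<dots> = inner (P h) g" using K by (simp add: Psa)
    finally show "inner (R h) (R g) = inner (P h) g" .
  qed
  ultimately show ?thesis by (intro exI[of _ R]) simp
qed



lemma inner_eqI:
  fixes x y :: "'a::real_inner"
  assumes "\<And>g. inner x g = inner y g" shows "x = y"
proof -
  have "inner (x - y) g = 0" for g using assms[of g] by (simp add: inner_diff_left)
  then show ?thesis using inner_zero_all[of "x - y"] by simp
qed

locale cvx_setup =
  fixes T :: "'a::chilbert \<Rightarrow> 'a" and M :: real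
  assumes Tc: "bounded_clinear_op T" and cvx: "convex_op T"
    and Mb: "\<And>n. (onorm (T^^n))\<^sup>2 / real (n + 1) \<le> M"
begin

lemma Tbl: "bounded_linear T" using Tc by (simp add: bounded_clinear_op_def)
lemma Ti: "T (imult x) = imult (T x)" using Tc by (simp add: bounded_clinear_op_def)

sublocale T: bounded_linear T by (rule Tbl)

lemma Tnbl: "bounded_linear (T^^n)" by (rule bounded_linear_funpow[OF Tbl])

lemma Tn_add: "(T^^n) (x + y) = (T^^n) x + (T^^n) y"
proof -
  interpret Tn: bounded_linear "T^^n" by (rule Tnbl)
  show ?thesis by (rule Tn.add)
qed
lemma Tn_scaleR: "(T^^n) (r *\<^sub>R x) = r *\<^sub>R (T^^n) x"
proof -
  interpret Tn: bounded_linear "T^^n" by (rule Tnbl)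
  show ?thesis by (rule Tn.scaleR)
qed
lemma Tn_i: "(T^^n) (imult x) = imult ((T^^n) x)"
  by (induction n) (auto simp: Ti)
lemma Tn_Suc: "(T^^Suc n) x = (T^^n) (T x)"
  by (simp add: funpow_swap1)

lemma M_nonneg: "M \<ge> 0"
  using Mb[of 0] by (metis order_trans zero_le_power2 div_0 divide_nonneg_nonneg of_nat_0_le_iff)

lemma Tn_bound: "(norm ((T^^n) h))\<^sup>2 \<le> M * real (n + 1) * (norm h)\<^sup>2"
proof -
  have "norm ((T^^n) h) \<le> onorm (T^^n) * norm h" by (rule onorm[OF Tnbl])
  then have "(norm ((T^^n) h))\<^sup>2 \<le> (onorm (T^^n) * norm h)\<^sup>2" by (intro power_mono) auto
  also have "\<dots> = (onorm (T^^n))\<^sup>2 * (norm h)\<^sup>2" by (simp add: power_mult_distrib)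
  also have "\<dots> \<le> (M * real (n + 1)) * (norm h)\<^sup>2"
  proof (rule mult_right_mono)
    show "(onorm (T^^n))\<^sup>2 \<le> M * real (n + 1)"
      using Mb[of n] by (simp add: divide_le_eq algebra_simps)
  qed simp
  finally show ?thesis .
qed

definition c :: "'a \<Rightarrow> 'a \<Rightarrow> real" where
  "c u v = inner (T (T u)) (T (T v)) - 2 * inner (T u) (T v) + inner u v"

lemma c_pos: "c u u \<ge> 0"
proof -
  let ?A = "\<lambda>x. adjoint T (adjoint T (T (T x))) - 2 *\<^sub>R adjoint T (T x) + x"
  have "0 \<le> Re (cinner (?A u) u)" using cvx unfolding convex_op_def positive_op_def by blast
  then have "0 \<le> inner (?A u) u" by (simp add: cinner_def)
  moreover have "inner (adjoint T w) u = inner (T u) w" for w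
    by (metis adjoint_eq[OF Tbl] inner_commute)
  moreover have "inner (T u) (adjoint T w) = inner (T (T u)) w" for w
    by (rule adjoint_eq[OF Tbl, symmetric])
  ultimately show ?thesis
    by (simp add: c_def inner_add_left inner_diff_left power2_norm_eq_inner)
qed

lemma c_add: "c (x + y) z = c x z + c y z"
  by (simp add: c_def T.add inner_add_left algebra_simps)
lemma c_scaleR: "c (r *\<^sub>R x) y = r * c x y"
  by (simp add: c_def T.scaleR algebra_simps)
lemma c_sym: "c x y = c y x"
  by (simp add: c_def inner_commute)
lemma c_i: "c (imult x) y = - c x (imult y)"
  by (simp add: c_def Ti inner_imult_left algebra_simps)

lemma c_abs: "\<bar>c u v\<bar> \<le> (c u u + c v v) / 2"
proof -
  have "(c u v)\<^sup>2 \<le> c u u * c v v"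
    by (rule form_cs[where B = c]) (auto simp: c_add c_scaleR c_sym[of _ v] c_pos intro: c_sym)
  then have "\<bar>c u v\<bar> \<le> sqrt (c u u * c v v)" by (intro real_le_rsqrt) simp
  also have "\<dots> \<le> (c u u + c v v) / 2" by (rule arith_geo_mean_sqrt[OF c_pos c_pos])
  finally show ?thesis .
qed

definition KQ :: real where "KQ = 2 * M + 1"

lemma KQ_pos: "KQ \<ge> 1" using M_nonneg by (simp add: KQ_def)

lemma cn_eq:
  "c ((T^^n) h) ((T^^n) h) = (norm ((T^^Suc (Suc n)) h))\<^sup>2 - 2 * (norm ((T^^Suc n) h))\<^sup>2 + (norm ((T^^n) h))\<^sup>2"
  by (simp add: c_def power2_norm_eq_inner)

lemma Q_bound: "(\<Sum>n<N. c ((T^^n) h) ((T^^n) h)) \<le> KQ * (norm h)\<^sup>2"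
proof -
  define a where "a n = (norm ((T^^n) h))\<^sup>2" for n
  define d where "d n = a (Suc n) - a n" for n
  have cd: "c ((T^^n) h) ((T^^n) h) = d (Suc n) - d n" for n
    by (simp add: cn_eq a_def d_def)
  have "incseq d"
  proof (rule incseq_SucI)
    fix n show "d n \<le> d (Suc n)" using c_pos[of "(T^^n) h"] cd[of n] by simp
  qed
  then have dmono: "d n \<le> d m" if "n \<le> m" for n m using that by (simp add: incseq_def)
  have sumeq: "(\<Sum>n<N. c ((T^^n) h) ((T^^n) h)) = d N - d 0"
    by (simp add: cd sum_lessThan_telescope)
  have "real (N + 1) * d N \<le> (\<Sum>k<N+1. d (N + k))"
  proof -
    have "(\<Sum>k<N+1. d N) \<le> (\<Sum>k<N+1. d (N + k))" by (intro sum_mono dmono) simp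
    then show ?thesis by simp
  qed
  also have "(\<Sum>k<N+1. d (N + k)) = a (N + (N + 1)) - a N"
    using sum_lessThan_telescope[of "\<lambda>k. a (N + k)" "N + 1"] by (simp add: d_def)
  also have "\<dots> \<le> a (N + (N + 1))" by (simp add: a_def)
  also have "\<dots> \<le> M * real (N + (N + 1) + 1) * (norm h)\<^sup>2" unfolding a_def by (rule Tn_bound)
  also have "\<dots> = real (N + 1) * (2 * M * (norm h)\<^sup>2)" by (simp add: algebra_simps)
  finally have "d N \<le> 2 * M * (norm h)\<^sup>2"
    by (simp only: mult_le_cancel_left_pos[of "real (N + 1)"])
  moreover have "- d 0 \<le> (norm h)\<^sup>2" by (simp add: d_def a_def)
  ultimately show ?thesis by (simp add: sumeq KQ_def algebra_simps)
qed

lemma Q_summable: "summable (\<lambda>n. c ((T^^n) h) ((T^^n) h))"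
  by (rule summableI_nonneg_bounded[OF c_pos Q_bound])

lemma cn_summable: "summable (\<lambda>n. c ((T^^n) h) ((T^^n) g))"
proof (rule summable_comparison_test)
  show "\<exists>N. \<forall>n\<ge>N. norm (c ((T^^n) h) ((T^^n) g)) \<le> (c ((T^^n) h) ((T^^n) h) + c ((T^^n) g) ((T^^n) g)) / 2"
    using c_abs by auto
  show "summable (\<lambda>n. (c ((T^^n) h) ((T^^n) h) + c ((T^^n) g) ((T^^n) g)) / 2)"
    by (intro summable_divide summable_add Q_summable)
qed

definition b :: "'a \<Rightarrow> 'a \<Rightarrow> real" where
  "b h g = (\<Sum>n. c ((T^^n) h) ((T^^n) g))"

lemma b_add: "b (x + y) z = b x z + b y z"
  unfolding b_def by (simp add: Tn_add c_add suminf_add[OF cn_summable cn_summable])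
lemma b_scaleR: "b (r *\<^sub>R x) y = r * b x y"
  unfolding b_def by (simp add: Tn_scaleR c_scaleR suminf_mult[OF cn_summable])
lemma b_sym: "b x y = b y x"
  unfolding b_def by (simp add: c_sym[of "(T^^_) x"])
lemma b_pos: "b x x \<ge> 0"
  unfolding b_def by (intro suminf_nonneg Q_summable c_pos)
lemma b_bound: "b x x \<le> KQ * (norm x)\<^sup>2"
  unfolding b_def by (intro suminf_le_const Q_summable Q_bound)
lemma b_i: "b (imult x) y = - b x (imult y)"
proof -
  have "(\<lambda>n. c ((T^^n) (imult x)) ((T^^n) y)) = (\<lambda>n. - c ((T^^n) x) ((T^^n) (imult y)))"
    by (simp add: Tn_i c_i)
  then show ?thesis unfolding b_def by (simp only: suminf_minus[OF cn_summable[of x "imult y"]])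
qed
lemma b_shift: "b h g = c h g + b (T h) (T g)"
proof -
  have "(\<Sum>n. c ((T^^Suc n) h) ((T^^Suc n) g)) = b h g - c h g"
    unfolding b_def by (subst suminf_split_head[OF cn_summable]) simp
  moreover have "(\<lambda>n. c ((T^^Suc n) h) ((T^^Suc n) g)) = (\<lambda>n. c ((T^^n) (T h)) ((T^^n) (T g)))"
    by (simp only: Tn_Suc)
  ultimately have "b (T h) (T g) = b h g - c h g" by (simp only: b_def)
  then show ?thesis by simp
qed
lemma b_zero: "b x 0 = 0"
  using b_scaleR[of 0 0 x] b_sym[of x 0] by simp

lemma b_cs: "(b x y)\<^sup>2 \<le> b x x * b y y"
proof (rule form_cs[where B = b])
  show "\<And>x y z. b (x + y) z = b x z + b y z" by (rule b_add)
  show "\<And>r x y. b (r *\<^sub>R x) y = r * b x y" by (rule b_scaleR)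
  show "\<And>x y. b x y = b y x" by (rule b_sym)
  show "\<And>x. 0 \<le> b x x" by (rule b_pos)
qed

lemma b_abs: "\<bar>b x y\<bar> \<le> KQ * norm x * norm y"
proof -
  have k0: "0 \<le> KQ" using KQ_pos by simp
  have "b x x * b y y \<le> (KQ * (norm x)\<^sup>2) * (KQ * (norm y)\<^sup>2)"
    by (rule mult_mono[OF b_bound b_bound]) (simp_all add: k0 b_pos)
  then have "(b x y)\<^sup>2 \<le> (KQ * (norm x)\<^sup>2) * (KQ * (norm y)\<^sup>2)"
    using b_cs[of x y] by (rule_tac order_trans) 
  also have "(KQ * (norm x)\<^sup>2) * (KQ * (norm y)\<^sup>2) = (KQ * norm x * norm y)\<^sup>2"
    by (simp only: power_mult_distrib power2_eq_square mult_ac)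
  finally have "(\<bar>b x y\<bar>)\<^sup>2 \<le> (KQ * norm x * norm y)\<^sup>2" by (simp only: power2_abs)
  moreover have "0 \<le> KQ * norm x * norm y" using k0 by simp
  ultimately show ?thesis by (rule power2_le_imp_le)
qed

definition P :: "'a \<Rightarrow> 'a" where "P h = (SOME z. \<forall>g. b h g = inner z g)"

lemma P_prop: "b h g = inner (P h) g"
proof -
  have "bounded_linear (\<lambda>g. b h g)"
  proof (rule bounded_linear_intro[where K = "KQ * norm h"])
    show "b h (x + y) = b h x + b h y" for x y by (simp add: b_sym[of h] b_add)
    show "b h (r *\<^sub>R x) = r *\<^sub>R b h x" for r x by (simp add: b_sym[of h] b_scaleR)
    show "norm (b h x) \<le> norm x * (KQ * norm h)" for x using b_abs[of h x] by (simp add: algebra_simps)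
  qed
  then have "\<exists>z. \<forall>g. b h g = inner z g" by (rule riesz)
  then have "\<forall>g. b h g = inner (P h) g" unfolding P_def by (rule someI_ex)
  then show ?thesis by blast
qed

lemma P_sa: "inner (P h) g = inner h (P g)"
  by (metis P_prop b_sym inner_commute)
lemma P_pos: "0 \<le> inner (P h) h"
  using b_pos[of h] by (simp add: P_prop)
lemma P_add: "P (x + y) = P x + P y"
  by (rule inner_eqI) (simp add: P_prop[symmetric] b_add inner_add_left)
lemma P_scaleR: "P (r *\<^sub>R x) = r *\<^sub>R P x"
  by (rule inner_eqI) (simp add: P_prop[symmetric] b_scaleR)
lemma P_i: "P (imult h) = imult (P h)"
  by (rule inner_eqI) (simp add: P_prop[symmetric] b_i inner_imult_left)
lemma P_norm: "norm (P h) \<le> norm h * KQ"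
proof (cases "P h = 0")
  case True then show ?thesis using KQ_pos by simp
next
  case False
  have "norm (P h) * norm (P h) = b h (P h)" by (simp add: P_prop power2_norm_eq_inner[symmetric] power2_eq_square)
  also have "\<dots> \<le> \<bar>b h (P h)\<bar>" by simp
  also have "\<dots> \<le> KQ * norm h * norm (P h)" by (rule b_abs)
  finally have "norm (P h) * norm (P h) \<le> (norm h * KQ) * norm (P h)" by (simp add: algebra_simps)
  then show ?thesis using False by simp
qed
lemma P_bl: "bounded_linear P"
  by (rule bounded_linear_intro[where K = KQ]) (simp_all add: P_add P_scaleR P_norm)

definition R :: "'a \<Rightarrow> 'a" where
  "R = (SOME R :: 'a \<Rightarrow> 'a. bounded_linear R \<and> (\<forall>h. R (imult h) = imult (R h))
              \<and> (\<forall>h g. inner (R h) (R g) = inner (P h) g))"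

lemma R_props: "bounded_linear R \<and> (\<forall>h. R (imult h) = imult (R h)) \<and> (\<forall>h g. inner (R h) (R g) = inner (P h) g)"
  unfolding R_def by (rule someI_ex[OF sqrt_op[OF P_bl P_sa P_pos P_i]])

lemma R_bl: "bounded_linear R" using R_props by blast
lemma R_i: "R (imult h) = imult (R h)" using R_props by blast
lemma R_inner: "inner (R h) (R g) = b h g" using R_props by (simp add: P_prop)
lemma R_add: "R (x + y) = R x + R y"
proof -
  interpret R: bounded_linear R by (rule R_bl)
  show ?thesis by (rule R.add)
qed
lemma R_scaleR: "R (r *\<^sub>R x) = r *\<^sub>R R x"
proof -
  interpret R: bounded_linear R by (rule R_bl)
  show ?thesis by (rule R.scaleR)
qed

definition E :: "'a \<Rightarrow> 'a \<Rightarrow> real" where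
  "E h g = inner (T h) (T g) + b h g - inner h g"

lemma E_inv: "E (T h) (T g) = E h g"
  by (simp add: E_def b_shift[of h g] c_def)

lemma E_zero: "E h 0 = 0"
  by (simp add: E_def b_zero)

definition sf :: "(nat \<Rightarrow> 'a) \<Rightarrow> nat \<Rightarrow> 'a" where
  "sf f n = (if n = 0 then T (f 0) else if n = 1 then R (f 0) else f (n - 1))"
definition S :: "'a l2 \<Rightarrow> 'a l2" where "S x = Abs_l2 (sf (l2_fun x))"
definition vf :: "'a \<Rightarrow> nat \<Rightarrow> 'a" where "vf h n = (if n = 0 then h else 0)"
definition V :: "'a \<Rightarrow> 'a l2" where "V h = Abs_l2 (vf h)"

lemma summable_SucSuc: "summable (\<lambda>n. g (Suc (Suc n))) \<Longrightarrow> summable (g :: nat \<Rightarrow> real)"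
  using summable_Suc_iff[of "\<lambda>n. g (Suc n)"] summable_Suc_iff[of g] by simp

lemma sf_summable:
  assumes "summable (\<lambda>n. (norm (f n))\<^sup>2)" shows "summable (\<lambda>n. (norm (sf f n))\<^sup>2)"
proof (rule summable_SucSuc)
  have "summable (\<lambda>n. (norm (f (Suc n)))\<^sup>2)" using assms by (subst summable_Suc_iff)
  then show "summable (\<lambda>n. (norm (sf f (Suc (Suc n))))\<^sup>2)" by (simp add: sf_def)
qed

lemma l2_fun_S: "l2_fun (S x) = sf (l2_fun x)"
  unfolding S_def by (rule Abs_l2_inverse) (simp add: sf_summable summable_l2_fun)

lemma vf_summable: "summable (\<lambda>n. (norm (vf h n))\<^sup>2)"
proof -
  have "(\<lambda>n. (norm (vf h n))\<^sup>2) = (\<lambda>n. if n = 0 then (norm h)\<^sup>2 else 0)"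
    by (auto simp: vf_def fun_eq_iff)
  moreover have "summable (\<lambda>n. if n = 0 then (norm h)\<^sup>2 else (0::real))"
    using sums_single[of 0 "\<lambda>_. (norm h)\<^sup>2"] by (auto simp: sums_iff)
  ultimately show ?thesis by simp
qed

lemma l2_fun_V: "l2_fun (V h) = vf h"
  unfolding V_def by (rule Abs_l2_inverse) (simp add: vf_summable)

lemma suminf_split2:
  fixes G :: "nat \<Rightarrow> real"
  assumes "summable G" shows "suminf G = G 0 + G 1 + (\<Sum>n. G (Suc (Suc n)))"
proof -
  have s1: "summable (\<lambda>n. G (Suc n))" using assms by (subst summable_Suc_iff)
  have "(\<Sum>n. G (Suc (Suc n))) = (\<Sum>n. G (Suc n)) - G 1"
    using suminf_split_head[OF s1] by simp
  moreover have "(\<Sum>n. G (Suc n)) = suminf G - G 0" by (rule suminf_split_head[OF assms])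
  ultimately show ?thesis by simp
qed

lemma S_inner: "inner (S x) (S y) = inner x y + E (l2_fun x 0) (l2_fun y 0)"
proof -
  define f where "f = l2_fun x"
  define g where "g = l2_fun y"
  have sf_ok: "summable (\<lambda>n. (norm (f n))\<^sup>2)" "summable (\<lambda>n. (norm (g n))\<^sup>2)"
    by (simp_all add: f_def g_def summable_l2_fun)
  have sG: "summable (\<lambda>n. inner (sf f n) (sf g n))"
    by (rule summable_l2_inner[OF sf_summable[OF sf_ok(1)] sf_summable[OF sf_ok(2)]])
  have sF: "summable (\<lambda>n. inner (f n) (g n))" by (rule summable_l2_inner[OF sf_ok])
  have "inner (S x) (S y) = (\<Sum>n. inner (sf f n) (sf g n))"
    by (simp add: inner_l2.rep_eq l2_fun_S f_def g_def)
  also have "\<dots> = inner (T (f 0)) (T (g 0)) + inner (R (f 0)) (R (g 0)) + (\<Sum>n. inner (f (Suc n)) (g (Suc n)))"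
    by (subst suminf_split2[OF sG]) (simp add: sf_def)
  also have "(\<Sum>n. inner (f (Suc n)) (g (Suc n))) = inner x y - inner (f 0) (g 0)"
    using suminf_split_head[OF sF] by (simp add: inner_l2.rep_eq f_def g_def)
  finally show ?thesis by (simp add: E_def R_inner f_def g_def)
qed

lemma S_0: "l2_fun (S x) 0 = T (l2_fun x 0)"
  by (simp add: l2_fun_S sf_def)

lemma S_add: "S (x + y) = S x + S y"
  by (simp add: l2_fun_inject[symmetric] l2_fun_S plus_l2.rep_eq fun_eq_iff sf_def T.add R_add)
lemma S_scaleR: "S (r *\<^sub>R x) = r *\<^sub>R S x"
  by (simp add: l2_fun_inject[symmetric] l2_fun_S scaleR_l2.rep_eq fun_eq_iff sf_def T.scaleR R_scaleR)
lemma S_i: "S (imult x) = imult (S x)"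
  by (simp add: l2_fun_inject[symmetric] l2_fun_S imult_l2.rep_eq fun_eq_iff sf_def Ti R_i)

lemma S_normsq: "(norm (S x))\<^sup>2 \<le> (1 + (onorm T)\<^sup>2 + KQ) * (norm x)\<^sup>2"
proof -
  define f0 where "f0 = l2_fun x 0"
  have nf: "(norm f0)\<^sup>2 \<le> (norm x)\<^sup>2" unfolding f0_def by (intro power_mono l2_coord_le) simp
  have "norm (T f0) \<le> onorm T * norm f0" by (rule onorm[OF Tbl])
  then have "(norm (T f0))\<^sup>2 \<le> (onorm T * norm f0)\<^sup>2" by (intro power_mono) auto
  then have t: "(norm (T f0))\<^sup>2 \<le> (onorm T)\<^sup>2 * (norm f0)\<^sup>2" by (simp add: power_mult_distrib)
  have "(norm (S x))\<^sup>2 = (norm x)\<^sup>2 + E f0 f0"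
    by (simp add: power2_norm_eq_inner S_inner f0_def)
  also have "E f0 f0 = (norm (T f0))\<^sup>2 + b f0 f0 - (norm f0)\<^sup>2"
    by (simp add: E_def power2_norm_eq_inner)
  also have "\<dots> \<le> ((onorm T)\<^sup>2 + KQ) * (norm f0)\<^sup>2"
    unfolding distrib_right using t b_bound[of f0] zero_le_power2[of "norm f0"] by linarith
  also have "\<dots> \<le> ((onorm T)\<^sup>2 + KQ) * (norm x)\<^sup>2"
    using nf KQ_pos by (intro mult_left_mono) auto
  finally show ?thesis by (simp add: algebra_simps)
qed

lemma S_bl: "bounded_linear S"
proof (rule bounded_linear_intro[where K = "sqrt (1 + (onorm T)\<^sup>2 + KQ)"])
  show "S (x + y) = S x + S y" for x y by (rule S_add)
  show "S (r *\<^sub>R x) = r *\<^sub>R S x" for r x by (rule S_scaleR)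
  show "norm (S x) \<le> norm x * sqrt (1 + (onorm T)\<^sup>2 + KQ)" for x
    using norm_le_sqrt[OF S_normsq[of x]] by (simp add: mult.commute)
qed

lemma V_inner: "inner (V h) y = inner h (l2_fun y 0)"
proof -
  have "(\<lambda>n. inner (vf h n) (l2_fun y n)) = (\<lambda>n. if n = 0 then inner h (l2_fun y n) else 0)"
    by (auto simp: vf_def fun_eq_iff)
  moreover have "(\<lambda>n. if n = 0 then inner h (l2_fun y n) else 0) sums inner h (l2_fun y 0)"
    by (rule sums_single)
  ultimately have "(\<lambda>n. inner (vf h n) (l2_fun y n)) sums inner h (l2_fun y 0)" by simp
  then show ?thesis by (simp add: inner_l2.rep_eq l2_fun_V sums_iff)
qed

lemma V_0: "l2_fun (V h) 0 = h" by (simp add: l2_fun_V vf_def)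

lemma V_norm: "norm (V h) = norm h"
proof -
  have "(norm (V h))\<^sup>2 = (norm h)\<^sup>2" by (simp add: power2_norm_eq_inner V_inner V_0)
  then show ?thesis by (simp add: power2_eq_iff_nonneg)
qed

lemma V_add: "V (x + y) = V x + V y"
  by (simp add: l2_fun_inject[symmetric] l2_fun_V plus_l2.rep_eq fun_eq_iff vf_def)
lemma V_scaleR: "V (r *\<^sub>R x) = r *\<^sub>R V x"
  by (simp add: l2_fun_inject[symmetric] l2_fun_V scaleR_l2.rep_eq fun_eq_iff vf_def)
lemma V_i: "V (imult x) = imult (V x)"
  by (simp add: l2_fun_inject[symmetric] l2_fun_V imult_l2.rep_eq fun_eq_iff vf_def)

lemma V_bl: "bounded_linear V"
  by (rule bounded_linear_intro[where K = 1]) (simp_all add: V_add V_scaleR V_norm)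

lemma V_adj: "adjoint V y = l2_fun y 0"
proof (rule inner_eqI)
  fix g
  have "inner (adjoint V y) g = inner g (adjoint V y)" by (rule inner_commute)
  also have "\<dots> = inner (V g) y" by (rule adjoint_eq[OF V_bl, symmetric])
  also have "\<dots> = inner (l2_fun y 0) g" using V_inner[of g y] inner_commute by metis
  finally show "inner (adjoint V y) g = inner (l2_fun y 0) g" .
qed

lemma S_adj: "inner (adjoint S u) w = inner (S w) u"
  by (metis adjoint_eq[OF S_bl] inner_commute)

lemma lifting: "is_lifting S V T"
  unfolding is_lifting_def bounded_clinear_op_def
  by (simp add: S_bl V_bl S_i V_i V_norm V_adj S_0)

lemma two_iso: "two_isometry S"
  unfolding two_isometry_def
proof
  fix x
  show "adjoint S (adjoint S (S (S x))) - 2 *\<^sub>R adjoint S (S x) + x = 0"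
  proof (rule inner_zero_all)
    fix w
    have "inner (adjoint S (adjoint S (S (S x)))) w = inner (S (S w)) (S (S x))"
      by (simp add: S_adj adjoint_eq[OF S_bl, symmetric])
    also have "\<dots> = inner w x + 2 * E (l2_fun w 0) (l2_fun x 0)"
      by (simp add: S_inner S_0 E_inv)
    finally have 1: "inner (adjoint S (adjoint S (S (S x)))) w = inner w x + 2 * E (l2_fun w 0) (l2_fun x 0)" .
    have 2: "inner (adjoint S (S x)) w = inner w x + E (l2_fun w 0) (l2_fun x 0)"
      by (simp add: S_adj S_inner)
    show "inner (adjoint S (adjoint S (S (S x))) - 2 *\<^sub>R adjoint S (S x) + x) w = 0"
    proof -
      have 3: "inner x w = inner w x" by (rule inner_commute)
      show ?thesis by (simp add: inner_add_left inner_diff_left 1 2 3)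
    qed
  qed
qed

lemma compl: "complement_in_ker S V"
  unfolding complement_in_ker_def
proof (intro allI impI)
  fix k assume k: "\<forall>h. cinner k (V h) = 0"
  have "inner k (V h) = 0" for h
    using k[rule_format, of h] by (simp add: cinner_def complex_eq_iff)
  then have "inner h (l2_fun k 0) = 0" for h by (simp add: V_inner[symmetric] inner_commute)
  then have k0: "l2_fun k 0 = 0" using inner_zero_all[of "l2_fun k 0"] by (simp add: inner_commute)
  show "adjoint S (S k) - k = 0"
  proof (rule inner_zero_all)
    fix w
    have "inner (adjoint S (S k)) w = inner (S w) (S k)" by (rule S_adj)
    also have "\<dots> = inner w k" by (simp add: S_inner k0 E_zero)
    also have "\<dots> = inner k w" by (rule inner_commute)
    finally show "inner (adjoint S (S k) - k) w = 0" by (simp add: inner_diff_left)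
  qed
qed

end

lemma part2:
  fixes T :: "'a::chilbert \<Rightarrow> 'a"
  assumes "bounded_clinear_op T" "convex_op T"
    and "bdd_above (range (\<lambda>n. (onorm (T ^^ n))\<^sup>2 / real (n + 1)))"
  shows "\<exists>(S :: 'a l2 \<Rightarrow> 'a l2) V. is_lifting S V T \<and> two_isometry S \<and> complement_in_ker S V"
proof -
  obtain M where M: "\<And>n. (onorm (T ^^ n))\<^sup>2 / real (n + 1) \<le> M"
    using assms(3) unfolding bdd_above_def by auto
  interpret cvx_setup T M using assms M by unfold_locales auto
  show ?thesis using lifting two_iso compl by blast
qed


theorem theorem3p2:
  fixes T :: "'a::chilbert \<Rightarrow> 'a"
  assumes "bounded_clinear_op T"
    and "convex_op T"
  shows "((\<exists>(S :: 'b::chilbert \<Rightarrow> 'b) V. is_lifting S V T \<and> two_isometry S)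
            \<longrightarrow> bdd_above (range (\<lambda>n. (onorm (T ^^ n))\<^sup>2 / real (n + 1))))
       \<and> (bdd_above (range (\<lambda>n. (onorm (T ^^ n))\<^sup>2 / real (n + 1)))
            \<longrightarrow> (\<exists>(S :: 'a l2 \<Rightarrow> 'a l2) V. is_lifting S V T \<and> two_isometry S
                   \<and> complement_in_ker S V))
       \<and> ((\<exists>(S :: 'b \<Rightarrow> 'b) V. is_lifting S V T \<and> two_isometry S \<and> complement_in_ker S V)
            \<longrightarrow> (\<exists>(S :: 'b \<Rightarrow> 'b) V. is_lifting S V T \<and> two_isometry S))"
proof (intro conjI impI)
  assume "\<exists>(S :: 'b::chilbert \<Rightarrow> 'b) V. is_lifting S V T \<and> two_isometry S"
  then obtain S :: "'b \<Rightarrow> 'b" and V where SV: "is_lifting S V T" "two_isometry S" by blast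
  show "bdd_above (range (\<lambda>n. (onorm (T ^^ n))\<^sup>2 / real (n + 1)))"
    by (rule part1[OF assms(1) SV])
next
  assume "bdd_above (range (\<lambda>n. (onorm (T ^^ n))\<^sup>2 / real (n + 1)))"
  then show "\<exists>(S :: 'a l2 \<Rightarrow> 'a l2) V. is_lifting S V T \<and> two_isometry S \<and> complement_in_ker S V"
    using part2[OF assms] by blast
next
  assume "\<exists>(S :: 'b \<Rightarrow> 'b) V. is_lifting S V T \<and> two_isometry S \<and> complement_in_ker S V"
  then show "\<exists>(S :: 'b \<Rightarrow> 'b) V. is_lifting S V T \<and> two_isometry S" by blast
qed

end
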